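(* Assume the setting described in the context. For every $(\mu,Q)\in\mathcal M_*$, $$I(\mu,Q)=\sup_{\phi,F}I_{\phi,F}(\mu,Q),$$ where the supremum is over all $\phi:V\times\mathcal S_{T_0}\to\mathbb R$ of class $C^1$ in time and all continuous $F:E\times\mathcal S_{T_0}\to\mathbb R$.
   Context: Let $V$ be a finite set, $T_0>0$, $\mathcal S_{T_0}=\mathbb R/T_0\mathbb Z$. For $y,z\in V$, $r(y,z;\cdot)\ge0$ is measurable, $T_0$-periodic, $r(x,x;\cdot)=0$; $E$ is the set of $(y,z)$, $y\ne z$, with $r(y,z;t)>0$ for all $t>0$. Assume (A1) if $r(y,z;t)>0$ for some $t>0$ then for all $t>0$; (A2) $(V,E)$ strongly connected; (A3) $\max_E\sup_{t\in[0,T_0]}r<\infty$, $\min_E\inf_{t\in[0,T_0]}r>0$; (A4) the discontinuity points in $\mathcal S_{T_0}$ of the rates form a Lebesgue-null set. $\mathcal M_*=\mathcal M_{+,T_0}(V\times\mathcal S_{T_0})\times\mathcal M_+(E\times\mathcal S_{T_0})$ (nonnegative measures of total mass $T_0$, resp. finite nonnegative measures). $r(y;t)=\sum_zr(y,z;t)$, $r^F(y,z;t)=r(y,z;t)e^{F(y,z;t)}$, $r^F(y;t)=\sum_zr^F(y,z;t)$; $\mathrm{div}\,Q(\phi)=\sum_y\int\phi(y,s)[\sum_zQ(y,z,ds)-\sum_zQ(z,y,ds)]$; $\hat I_{\phi,F}(\mu,Q)=-\mu(\partial_t\phi)+\mathrm{div}\,Q(\phi)+Q(F)-\mu(r^F-r)$;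 $I_{\phi,F}(\mu,Q)=\hat I_{\phi,F}(\mu,Q)$ if $\mu=\mu_tdt$ with $\mu_t(V)=1$ a.e., and $+\infty$ otherwise. $\Phi(q,p)=q\log\frac qp-(q-p)$ for $q,p>0$, $\Phi(0,p)=p$, $\Phi(q,0)=+\infty$ for $q>0$. $\Lambda$ is the set of $(\mu,Q)\in\mathcal M_*$ with $\mu=\mu_tdt$, $\mu_t(V)=1$ a.e., $Q=Q_tdt$, $\int_0^{T_0}\sum_y\mu_s(y)\partial_sf(y,s)ds=\int_0^{T_0}\sum_y[\sum_zQ_s(y,z)-\sum_zQ_s(z,y)]f(y,s)ds$ for all $f$ $C^1$ in time, and for a.e. $t$, $\mu_t(y)=0\Rightarrow Q_t(y,z)=0$ for all $(y,z)\in E$. $I(\mu,Q)=\int_0^{T_0}\sum_{(y,z)\in E}\Phi(Q_t(y,z),\mu_t(y)r(y,z;t))dt$ if $(\mu,Q)\in\Lambda$ and $+\infty$ otherwise. *)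

theory Defs
  imports "HOL-Analysis.Analysis"
begin

text \<open>Time circle S_T0 = R/T0Z is represented by the fundamental domain [0,T0) with its
Borel sets; functions on the circle are T0-periodic functions on R.\<close>

definition circ :: "real \<Rightarrow> real measure" where
  "circ T0 = restrict_space lborel {0..<T0}"

definition edges :: "('v \<Rightarrow> 'v \<Rightarrow> real \<Rightarrow> real) \<Rightarrow> ('v \<times> 'v) set" where
  "edges r = {(y, z). y \<noteq> z \<and> (\<forall>t>0. r y z t > 0)}"

definition periodic_fun :: "real \<Rightarrow> (real \<Rightarrow> real) \<Rightarrow> bool" where
  "periodic_fun T0 g \<longleftrightarrow> (\<forall>t. g (t + T0) = g t)"

definition C1_time :: "real \<Rightarrow> ('v \<Rightarrow> real \<Rightarrow> real) \<Rightarrow> bool" where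
  "C1_time T0 f \<longleftrightarrow> (\<forall>y. periodic_fun T0 (f y) \<and>
      (\<exists>f'. (\<forall>t. (f y has_real_derivative f' t) (at t)) \<and> continuous_on UNIV f'))"

definition cont_edge :: "real \<Rightarrow> ('v \<times> 'v) set \<Rightarrow> ('v \<Rightarrow> 'v \<Rightarrow> real \<Rightarrow> real) \<Rightarrow> bool" where
  "cont_edge T0 E F \<longleftrightarrow> (\<forall>(y, z)\<in>E. periodic_fun T0 (F y z) \<and> continuous_on UNIV (F y z))"

text \<open>M_*: mu is a nonnegative measure on V x S_T0 of total mass T0, given as a family
of measures on S_T0 indexed by V; Q is a finite nonnegative measure on E x S_T0.\<close>
definition Mstar :: "real \<Rightarrow> ('v::finite \<times> 'v) set \<Rightarrow> ('v \<Rightarrow> real measure)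
     \<Rightarrow> ('v \<Rightarrow> 'v \<Rightarrow> real measure) \<Rightarrow> bool" where
  "Mstar T0 E \<mu> Q \<longleftrightarrow>
     (\<forall>y. sets (\<mu> y) = sets (circ T0) \<and> finite_measure (\<mu> y)) \<and>
     (\<Sum>y\<in>UNIV. measure (\<mu> y) (space (\<mu> y))) = T0 \<and>
     (\<forall>(y, z)\<in>E. sets (Q y z) = sets (circ T0) \<and> finite_measure (Q y z))"

definition mu_density :: "real \<Rightarrow> ('v::finite \<Rightarrow> real measure) \<Rightarrow> ('v \<Rightarrow> real \<Rightarrow> real) \<Rightarrow> bool" where
  "mu_density T0 \<mu> m \<longleftrightarrow>
     (\<forall>y. m y \<in> borel_measurable lborel \<and> (\<forall>t. 0 \<le> m y t) \<and>
          \<mu> y = density (circ T0) (\<lambda>t. ennreal (m y t))) \<and>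
     (AE t in lborel. t \<in> {0..<T0} \<longrightarrow> (\<Sum>y\<in>UNIV. m y t) = 1)"

definition abs_cont_prob :: "real \<Rightarrow> ('v::finite \<Rightarrow> real measure) \<Rightarrow> bool" where
  "abs_cont_prob T0 \<mu> \<longleftrightarrow> (\<exists>m. mu_density T0 \<mu> m)"

definition Lambda_dens :: "real \<Rightarrow> ('v::finite \<times> 'v) set \<Rightarrow> ('v \<Rightarrow> real measure)
     \<Rightarrow> ('v \<Rightarrow> 'v \<Rightarrow> real measure) \<Rightarrow> ('v \<Rightarrow> real \<Rightarrow> real) \<Rightarrow> ('v \<Rightarrow> 'v \<Rightarrow> real \<Rightarrow> real) \<Rightarrow> bool" where
  "Lambda_dens T0 E \<mu> Q m q \<longleftrightarrow>
     mu_density T0 \<mu> m \<and>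
     (\<forall>(y, z)\<in>E. q y z \<in> borel_measurable lborel \<and> (\<forall>t. 0 \<le> q y z t) \<and>
          Q y z = density (circ T0) (\<lambda>t. ennreal (q y z t))) \<and>
     (\<forall>f. C1_time T0 f \<longrightarrow>
        (\<integral>s\<in>{0..<T0}. (\<Sum>y\<in>UNIV. m y s * deriv (f y) s) \<partial>lborel) =
        (\<integral>s\<in>{0..<T0}. (\<Sum>y\<in>UNIV. ((\<Sum>z\<in>{z. (y, z) \<in> E}. q y z s)
                                    - (\<Sum>z\<in>{z. (z, y) \<in> E}. q z y s)) * f y s) \<partial>lborel)) \<and>
     (AE t in lborel. t \<in> {0..<T0} \<longrightarrow> (\<forall>(y, z)\<in>E. m y t = 0 \<longrightarrow> q y z t = 0))"

definition Phi :: "real \<Rightarrow> real \<Rightarrow> ennreal" where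
  "Phi q p = (if q = 0 then ennreal p
              else if p = 0 then \<infinity>
              else ennreal (q * ln (q / p) - (q - p)))"

text \<open>The rate function I(mu,Q); the value does not depend on the choice of densities
(they are unique a.e.).\<close>
definition Irate :: "real \<Rightarrow> ('v::finite \<Rightarrow> 'v \<Rightarrow> real \<Rightarrow> real) \<Rightarrow> ('v \<Rightarrow> real measure)
     \<Rightarrow> ('v \<Rightarrow> 'v \<Rightarrow> real measure) \<Rightarrow> ereal" where
  "Irate T0 r \<mu> Q =
     (if \<exists>m q. Lambda_dens T0 (edges r) \<mu> Q m q then
        (let (m, q) = (SOME (m, q). Lambda_dens T0 (edges r) \<mu> Q m q) in
          enn2ereal (\<integral>\<^sup>+ t\<in>{0..<T0}.
             (\<Sum>(y, z)\<in>edges r. Phi (q y z t) (m y t * r y z t)) \<partial>lborel))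
      else \<infinity>)"

definition Ihat :: "real \<Rightarrow> ('v::finite \<Rightarrow> 'v \<Rightarrow> real \<Rightarrow> real) \<Rightarrow> ('v \<Rightarrow> real \<Rightarrow> real)
     \<Rightarrow> ('v \<Rightarrow> 'v \<Rightarrow> real \<Rightarrow> real) \<Rightarrow> ('v \<Rightarrow> real measure) \<Rightarrow> ('v \<Rightarrow> 'v \<Rightarrow> real measure) \<Rightarrow> real" where
  "Ihat T0 r \<phi> F \<mu> Q =
     - (\<Sum>y\<in>UNIV. \<integral>s. deriv (\<phi> y) s \<partial>(\<mu> y))
     + (\<Sum>(y, z)\<in>edges r. \<integral>s. (\<phi> y s - \<phi> z s) \<partial>(Q y z))
     + (\<Sum>(y, z)\<in>edges r. \<integral>s. F y z s \<partial>(Q y z))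
     - (\<Sum>y\<in>UNIV. \<integral>s. (\<Sum>z\<in>{z. (y, z) \<in> edges r}. r y z s * (exp (F y z s) - 1)) \<partial>(\<mu> y))"

definition Iphi :: "real \<Rightarrow> ('v::finite \<Rightarrow> 'v \<Rightarrow> real \<Rightarrow> real) \<Rightarrow> ('v \<Rightarrow> real \<Rightarrow> real)
     \<Rightarrow> ('v \<Rightarrow> 'v \<Rightarrow> real \<Rightarrow> real) \<Rightarrow> ('v \<Rightarrow> real measure) \<Rightarrow> ('v \<Rightarrow> 'v \<Rightarrow> real measure) \<Rightarrow> ereal" where
  "Iphi T0 r \<phi> F \<mu> Q = (if abs_cont_prob T0 \<mu> then ereal (Ihat T0 r \<phi> F \<mu> Q) else \<infinity>)"

end

theory Submission
  imports Defs
begin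

definition ecirc :: "real \<Rightarrow> real \<Rightarrow> complex" where
  "ecirc T0 t = cis ((2*pi/T0) * t)"

lemma ecirc_cont: "continuous_on UNIV (ecirc T0)"
  unfolding ecirc_def by (intro continuous_intros)

lemma ecirc_per: assumes "T0 \<noteq> 0" shows "ecirc T0 (t + T0) = ecirc T0 t"
proof -
  have "(2*pi/T0)*(t+T0) = (2*pi/T0)*t + 2*pi" using assms by (simp add: field_simps)
  then show ?thesis unfolding ecirc_def by (simp add: complex_eq_iff)
qed

lemma ecirc_inj:
  assumes "T0 > 0" "a \<in> {0..<T0}" "b \<in> {0..<T0}" "ecirc T0 a = ecirc T0 b"
  shows "a = b"
proof -
  have "sin ((2*pi/T0)*a) = sin ((2*pi/T0)*b) \<and> cos ((2*pi/T0)*a) = cos ((2*pi/T0)*b)"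
    using assms(4) unfolding ecirc_def by (simp add: complex_eq_iff)
  then obtain k :: int where k: "(2*pi/T0)*a = (2*pi/T0)*b + 2*pi*k"
    using sin_cos_eq_iff by blast
  have "a = b + k * T0"
  proof -
    have "2*pi*a = 2*pi*b + 2*pi*k*T0" using k assms(1) by (simp add: field_simps)
    then have "2*pi*(a - (b + k*T0)) = 0" by (simp add: algebra_simps)
    then show ?thesis by simp
  qed
  moreover have "k = 0"
  proof -
    have "(-1) * T0 < k * T0" "k * T0 < 1 * T0" using assms(2,3) \<open>a = b + k*T0\<close>
      by (simp_all only: atLeastLessThan_iff mult_1 mult_minus1, linarith+)
    then have "-1 < real_of_int k" "real_of_int k < 1"
      using mult_less_cancel_right_pos[OF assms(1)] by blast+
    then show ?thesis by linarith
  qed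
  ultimately show ?thesis by simp
qed

lemma space_circ: "space (circ T0) = {0..<T0}"
  unfolding circ_def by (simp add: space_restrict_space)

lemma meas_circ:
  assumes "sets M = sets (circ T0)" "f \<in> borel_measurable borel"
  shows "f \<in> borel_measurable M"
proof -
  have "f \<in> borel_measurable lborel" using assms(2) by (simp add: measurable_lborel2)
  then have "f \<in> borel_measurable (circ T0)" unfolding circ_def
    by (rule measurable_restrict_space1)
  then show ?thesis by (subst measurable_cong_sets[OF assms(1) refl])
qed

lemma space_M: "sets M = sets (circ T0) \<Longrightarrow> space M = {0..<T0}"
  using sets_eq_imp_space_eq space_circ by metis

lemma sets_circ_iff: "A \<in> sets (circ T0) \<longleftrightarrow> A \<subseteq> {0..<T0} \<and> A \<in> sets borel"
  unfolding circ_def by (subst sets_restrict_space_iff) auto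

lemma inner_circ:
  assumes sM: "sets M = sets (circ T0)" and fin: "finite_measure M"
    and A: "A \<in> sets M" and e: "e > 0"
  shows "\<exists>K. compact K \<and> K \<subseteq> A \<and> measure M (A - K) < e"
proof -
  interpret finite_measure M by fact
  define M' where "M' = distr M borel (\<lambda>x. x)"
  have idm: "(\<lambda>x. x) \<in> measurable M borel" by (rule meas_circ[OF sM]) simp
  have sM': "sets M' = sets borel" unfolding M'_def by simp
  have em: "emeasure M' X = emeasure M X" if "X \<in> sets borel" "X \<subseteq> space M" for X
    unfolding M'_def using that idm by (subst emeasure_distr) (auto simp: Int_absorb2)
  have "emeasure M' (space M') = emeasure M (space M)"
    unfolding M'_def using idm by (subst emeasure_distr) auto
  then have finM': "emeasure M' (space M') \<noteq> \<infinity>" by simp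
  have Ab: "A \<in> sets borel" "A \<subseteq> space M" using A sM sets_circ_iff space_M[OF sM] by auto
  have reg: "emeasure M' A = (SUP K \<in> {K. K \<subseteq> A \<and> compact K}. emeasure M' K)"
    by (rule inner_regular[OF sM' finM' Ab(1)])
  show ?thesis
  proof (rule ccontr)
    assume nex: "\<not> ?thesis"
    have le: "measure M K \<le> measure M A - e" if "K \<subseteq> A" "compact K" for K
    proof -
      have "K \<in> sets M"
        using that Ab sM space_M[OF sM] by (auto simp add: sets_circ_iff compact_imp_closed borel_closed)
      then have "measure M (A - K) = measure M A - measure M K"
        using that by (simp add: finite_measure_Diff A)
      moreover have "\<not> measure M (A - K) < e" using nex that by blast
      ultimately show ?thesis by simp
    qed
    have "measure M A - e \<ge> 0" using le[of "{}"] by simp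
    have "(SUP K \<in> {K. K \<subseteq> A \<and> compact K}. emeasure M' K) \<le> ennreal (measure M A - e)"
    proof (rule SUP_least)
      fix K assume K: "K \<in> {K. K \<subseteq> A \<and> compact K}"
      then have "K \<in> sets borel" by (simp add: compact_imp_closed borel_closed)
      then have "emeasure M' K = ennreal (measure M K)"
        using em[of K] K Ab by (auto simp add: emeasure_eq_measure)
      then show "emeasure M' K \<le> ennreal (measure M A - e)" using le K by (simp add: ennreal_leI)
    qed
    also have "\<dots> < ennreal (measure M A)" using e \<open>measure M A - e \<ge> 0\<close>
      by (simp add: ennreal_lessI)
    also have "\<dots> = emeasure M' A" using em Ab by (simp add: emeasure_eq_measure)
    finally show False using reg by simp
  qed
qed


lemma cont_borel: "continuous_on UNIV (h::real \<Rightarrow> real) \<Longrightarrow> h \<in> borel_measurable borel"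
  by (rule borel_measurable_continuous_onI)

lemma nn_tri:
  assumes [measurable]: "h1 \<in> borel_measurable M" "h2 \<in> borel_measurable M"
    "f1 \<in> borel_measurable M" "f2 \<in> borel_measurable M"
  shows "(\<integral>\<^sup>+t. ennreal \<bar>(h1 t + h2 t) - (f1 t + f2 t)\<bar> \<partial>M)
      \<le> (\<integral>\<^sup>+t. ennreal \<bar>h1 t - f1 t\<bar> \<partial>M) + (\<integral>\<^sup>+t. ennreal \<bar>h2 t - f2 t\<bar> \<partial>M)"
proof -
  have "(\<integral>\<^sup>+t. ennreal \<bar>(h1 t + h2 t) - (f1 t + f2 t)\<bar> \<partial>M)
      \<le> (\<integral>\<^sup>+t. ennreal \<bar>h1 t - f1 t\<bar> + ennreal \<bar>h2 t - f2 t\<bar> \<partial>M)"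
    by (intro nn_integral_mono) (simp add: ennreal_plus[symmetric] del: ennreal_plus ennreal_leI)
  also have "\<dots> = (\<integral>\<^sup>+t. ennreal \<bar>h1 t - f1 t\<bar> \<partial>M) + (\<integral>\<^sup>+t. ennreal \<bar>h2 t - f2 t\<bar> \<partial>M)"
    by (intro nn_integral_add) measurable
  finally show ?thesis .
qed

lemma nn_scale:
  assumes [measurable]: "h \<in> borel_measurable M" "f \<in> borel_measurable M"
  shows "(\<integral>\<^sup>+t. ennreal \<bar>c * h t - c * f t\<bar> \<partial>M) = ennreal \<bar>c\<bar> * (\<integral>\<^sup>+t. ennreal \<bar>h t - f t\<bar> \<partial>M)"
proof -
  have "(\<integral>\<^sup>+t. ennreal \<bar>c * h t - c * f t\<bar> \<partial>M) = (\<integral>\<^sup>+t. ennreal \<bar>c\<bar> * ennreal \<bar>h t - f t\<bar> \<partial>M)"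
    by (intro nn_integral_cong) (simp add: ennreal_mult[symmetric] abs_mult[symmetric] right_diff_distrib)
  also have "\<dots> = ennreal \<bar>c\<bar> * (\<integral>\<^sup>+t. ennreal \<bar>h t - f t\<bar> \<partial>M)"
    by (intro nn_integral_cmult) measurable
  finally show ?thesis .
qed

lemma nn_unif:
  assumes [measurable]: "h \<in> borel_measurable M" "s \<in> borel_measurable M"
    and d: "\<And>t. t \<in> space M \<Longrightarrow> \<bar>f t - s t\<bar> \<le> \<delta>"
  shows "(\<integral>\<^sup>+t. ennreal \<bar>h t - f t\<bar> \<partial>M) \<le> (\<integral>\<^sup>+t. ennreal \<bar>h t - s t\<bar> \<partial>M) + ennreal \<delta> * emeasure M (space M)"
proof -
  have "(\<integral>\<^sup>+t. ennreal \<bar>h t - f t\<bar> \<partial>M) \<le> (\<integral>\<^sup>+t. ennreal \<bar>h t - s t\<bar> + ennreal \<delta> \<partial>M)"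
  proof (intro nn_integral_mono)
    fix t assume t: "t \<in> space M"
    have "\<bar>h t - f t\<bar> \<le> \<bar>h t - s t\<bar> + \<delta>" using d[OF t] by linarith
    moreover have "0 \<le> \<delta>" using d[OF t] by linarith
    ultimately show "ennreal \<bar>h t - f t\<bar> \<le> ennreal \<bar>h t - s t\<bar> + ennreal \<delta>"
      by (simp add: ennreal_plus[symmetric] del: ennreal_plus)
  qed
  also have "\<dots> = (\<integral>\<^sup>+t. ennreal \<bar>h t - s t\<bar> \<partial>M) + (\<integral>\<^sup>+t. ennreal \<delta> \<partial>M)"
    by (intro nn_integral_add) measurable
  also have "(\<integral>\<^sup>+t. ennreal \<delta> \<partial>M) = ennreal \<delta> * emeasure M (space M)"
    by simp
  finally show ?thesis .
qed

lemma ind_bound: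
  assumes [measurable]: "g \<in> borel_measurable M" and sets: "A \<in> sets M" "K \<in> sets M" "L \<in> sets M"
    and KA: "K \<subseteq> A" and L: "L \<subseteq> space M - A"
    and g01: "\<And>t. g t \<in> {0..1}" and gK: "\<And>t. t \<in> K \<Longrightarrow> g t = 1" and gL: "\<And>t. t \<in> L \<Longrightarrow> g t = 0"
  shows "(\<integral>\<^sup>+t. ennreal \<bar>g t - indicator A t\<bar> \<partial>M) \<le> emeasure M (A - K) + emeasure M ((space M - A) - L)"
proof -
  have [measurable]: "A \<in> sets M" "K \<in> sets M" "L \<in> sets M" by fact+
  have "(\<integral>\<^sup>+t. ennreal \<bar>g t - indicator A t\<bar> \<partial>M) \<le> (\<integral>\<^sup>+t. indicator (A - K) t + indicator ((space M - A) - L) t \<partial>M)"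
  proof (intro nn_integral_mono)
    fix t assume t: "t \<in> space M"
    have g: "0 \<le> g t" "g t \<le> 1" using g01[of t] by auto
    show "ennreal \<bar>g t - indicator A t\<bar> \<le> indicator (A - K) t + indicator ((space M - A) - L) t"
    proof (cases "t \<in> A")
      case True
      then show ?thesis using g gK[of t] t by (cases "t \<in> K") (auto simp: indicator_def)
    next
      case False
      then show ?thesis using g gL[of t] t by (cases "t \<in> L") (auto simp: indicator_def)
    qed
  qed
  also have "\<dots> = emeasure M (A - K) + emeasure M ((space M - A) - L)"
    by (subst nn_integral_add) auto
  finally show ?thesis .
qed

lemma ennreal_mult_less: assumes "X < ennreal d" "c > 0" shows "ennreal c * X < ennreal (c * d)"
proof -
  have "X \<noteq> top" using assms(1) by auto
  then obtain x where x: "0 \<le> x" "X = ennreal x" by (cases X) auto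
  then have "x < d" using assms(1) by (simp add: ennreal_less_iff)
  then have "c * x < c * d" using assms(2) by simp
  moreover have "ennreal c * X = ennreal (c * x)" using x assms(2) by (simp add: ennreal_mult)
  ultimately show ?thesis using assms(2) x by (simp add: ennreal_lessI)
qed

locale twom =
  fixes T0 :: real and M1 M2 :: "real measure"
  assumes T0: "T0 > 0" and s1: "sets M1 = sets (circ T0)" and s2: "sets M2 = sets (circ T0)"
    and fm1: "finite_measure M1" and fm2: "finite_measure M2"
begin

definition good :: "(real \<Rightarrow> real) \<Rightarrow> bool" where
  "good f \<longleftrightarrow> (\<forall>e::real>0. \<exists>h. continuous_on UNIV h \<and> periodic_fun T0 h \<and>
      (\<integral>\<^sup>+t. ennreal \<bar>h t - f t\<bar> \<partial>M1) < ennreal e \<and> (\<integral>\<^sup>+t. ennreal \<bar>h t - f t\<bar> \<partial>M2) < ennreal e)"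

lemma m1: "f \<in> borel_measurable borel \<Longrightarrow> f \<in> borel_measurable M1" using meas_circ[OF s1] .
lemma m2: "f \<in> borel_measurable borel \<Longrightarrow> f \<in> borel_measurable M2" using meas_circ[OF s2] .

lemma good_add:
  assumes "good f" "good g" and [measurable]: "f \<in> borel_measurable borel" "g \<in> borel_measurable borel"
  shows "good (\<lambda>t. f t + g t)"
  unfolding good_def
proof (intro allI impI)
  fix e :: real assume e: "e > 0"
  define d where "d = e / 2"
  have d0: "d > 0" using e by (auto simp: d_def)
  have d2: "ennreal d + ennreal d = ennreal e" using e unfolding d_def
    by (simp add: ennreal_plus[symmetric] del: ennreal_plus)
  obtain h1 where h1: "continuous_on UNIV h1" "periodic_fun T0 h1"
     "(\<integral>\<^sup>+t. ennreal \<bar>h1 t - f t\<bar> \<partial>M1) < ennreal d" "(\<integral>\<^sup>+t. ennreal \<bar>h1 t - f t\<bar> \<partial>M2) < ennreal d"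
    using assms(1) d0 unfolding good_def by blast
  obtain h2 where h2: "continuous_on UNIV h2" "periodic_fun T0 h2"
     "(\<integral>\<^sup>+t. ennreal \<bar>h2 t - g t\<bar> \<partial>M1) < ennreal d" "(\<integral>\<^sup>+t. ennreal \<bar>h2 t - g t\<bar> \<partial>M2) < ennreal d"
    using assms(2) d0 unfolding good_def by blast
  have [measurable]: "h1 \<in> borel_measurable borel" "h2 \<in> borel_measurable borel"
    using h1 h2 cont_borel by auto
  show "\<exists>h. continuous_on UNIV h \<and> periodic_fun T0 h \<and>
      (\<integral>\<^sup>+t. ennreal \<bar>h t - (f t + g t)\<bar> \<partial>M1) < ennreal e \<and> (\<integral>\<^sup>+t. ennreal \<bar>h t - (f t + g t)\<bar> \<partial>M2) < ennreal e"
  proof (intro exI conjI)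
    show "continuous_on UNIV (\<lambda>t. h1 t + h2 t)" using h1 h2 by (intro continuous_intros)
    show "periodic_fun T0 (\<lambda>t. h1 t + h2 t)" using h1 h2 by (simp add: periodic_fun_def)
    have "(\<integral>\<^sup>+t. ennreal \<bar>(h1 t + h2 t) - (f t + g t)\<bar> \<partial>M1) \<le> (\<integral>\<^sup>+t. ennreal \<bar>h1 t - f t\<bar> \<partial>M1) + (\<integral>\<^sup>+t. ennreal \<bar>h2 t - g t\<bar> \<partial>M1)"
      by (intro nn_tri m1) measurable
    also have "\<dots> < ennreal d + ennreal d" using h1 h2 by (intro add_strict_mono) auto
    finally show "(\<integral>\<^sup>+t. ennreal \<bar>(h1 t + h2 t) - (f t + g t)\<bar> \<partial>M1) < ennreal e" using d2 by simp
    have "(\<integral>\<^sup>+t. ennreal \<bar>(h1 t + h2 t) - (f t + g t)\<bar> \<partial>M2) \<le> (\<integral>\<^sup>+t. ennreal \<bar>h1 t - f t\<bar> \<partial>M2) + (\<integral>\<^sup>+t. ennreal \<bar>h2 t - g t\<bar> \<partial>M2)"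
      by (intro nn_tri m2) measurable
    also have "\<dots> < ennreal d + ennreal d" using h1 h2 by (intro add_strict_mono) auto
    finally show "(\<integral>\<^sup>+t. ennreal \<bar>(h1 t + h2 t) - (f t + g t)\<bar> \<partial>M2) < ennreal e" using d2 by simp
  qed
qed

lemma good_zero: "good (\<lambda>t. 0)"
  unfolding good_def
  by (intro allI impI exI[of _ "\<lambda>t. 0"]) (auto simp: periodic_fun_def)

lemma good_scale:
  assumes "good f" and [measurable]: "f \<in> borel_measurable borel"
  shows "good (\<lambda>t. c * f t)"
proof (cases "c = 0")
  case True then show ?thesis using good_zero by simp
next
  case False
  show ?thesis unfolding good_def
  proof (intro allI impI)
    fix e :: real assume e: "e > 0"
    have c: "\<bar>c\<bar> > 0" using False by simp
    obtain h where h: "continuous_on UNIV h" "periodic_fun T0 h"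
     "(\<integral>\<^sup>+t. ennreal \<bar>h t - f t\<bar> \<partial>M1) < ennreal (e / \<bar>c\<bar>)" "(\<integral>\<^sup>+t. ennreal \<bar>h t - f t\<bar> \<partial>M2) < ennreal (e / \<bar>c\<bar>)"
      using assms(1) e c unfolding good_def by (meson divide_pos_pos)
    have [measurable]: "h \<in> borel_measurable borel" using h cont_borel by auto
    show "\<exists>h. continuous_on UNIV h \<and> periodic_fun T0 h \<and>
      (\<integral>\<^sup>+t. ennreal \<bar>h t - c * f t\<bar> \<partial>M1) < ennreal e \<and> (\<integral>\<^sup>+t. ennreal \<bar>h t - c * f t\<bar> \<partial>M2) < ennreal e"
    proof (intro exI conjI)
      show "continuous_on UNIV (\<lambda>t. c * h t)" using h by (intro continuous_intros)
      show "periodic_fun T0 (\<lambda>t. c * h t)" using h by (simp add: periodic_fun_def)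
      have "(\<integral>\<^sup>+t. ennreal \<bar>c * h t - c * f t\<bar> \<partial>M1) = ennreal \<bar>c\<bar> * (\<integral>\<^sup>+t. ennreal \<bar>h t - f t\<bar> \<partial>M1)"
        by (intro nn_scale m1) measurable
      also have "\<dots> < ennreal (\<bar>c\<bar> * (e / \<bar>c\<bar>))" by (intro ennreal_mult_less h c)
      finally show "(\<integral>\<^sup>+t. ennreal \<bar>c * h t - c * f t\<bar> \<partial>M1) < ennreal e" using c by simp
      have "(\<integral>\<^sup>+t. ennreal \<bar>c * h t - c * f t\<bar> \<partial>M2) = ennreal \<bar>c\<bar> * (\<integral>\<^sup>+t. ennreal \<bar>h t - f t\<bar> \<partial>M2)"
        by (intro nn_scale m2) measurable
      also have "\<dots> < ennreal (\<bar>c\<bar> * (e / \<bar>c\<bar>))" by (intro ennreal_mult_less h c)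
      finally show "(\<integral>\<^sup>+t. ennreal \<bar>c * h t - c * f t\<bar> \<partial>M2) < ennreal e" using c by simp
    qed
  qed
qed

lemma good_sum:
  assumes "finite I" "\<And>i. i \<in> I \<Longrightarrow> good (f i)" "\<And>i. i \<in> I \<Longrightarrow> f i \<in> borel_measurable borel"
  shows "good (\<lambda>t. \<Sum>i\<in>I. f i t)"
  using assms
proof (induction I rule: finite_induct)
  case empty then show ?case using good_zero by simp
next
  case (insert i I)
  have m: "(\<lambda>t. \<Sum>i\<in>I. f i t) \<in> borel_measurable borel"
    using insert.prems by (intro borel_measurable_sum) auto
  have "good (\<lambda>t. f i t + (\<Sum>i\<in>I. f i t))"
    using insert by (intro good_add m) auto
  then show ?case using insert.hyps by simp
qed

lemma good_unif:
  assumes [measurable]: "f \<in> borel_measurable borel"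
    and approx: "\<And>\<delta>. \<delta> > 0 \<Longrightarrow> \<exists>s. good s \<and> s \<in> borel_measurable borel \<and> (\<forall>t\<in>{0..<T0}. \<bar>f t - s t\<bar> \<le> \<delta>)"
  shows "good f"
  unfolding good_def
proof (intro allI impI)
  fix e :: real assume e: "e > 0"
  interpret M1: finite_measure M1 by (rule fm1)
  interpret M2: finite_measure M2 by (rule fm2)
  define m1 where "m1 = measure M1 (space M1)"
  define m2 where "m2 = measure M2 (space M2)"
  have m12: "m1 \<ge> 0" "m2 \<ge> 0" unfolding m1_def m2_def by auto
  define \<delta> where "\<delta> = e / (4 * (m1 + m2 + 1))"
  have d0: "\<delta> > 0" using e m12 unfolding \<delta>_def by simp
  have "m1 + m2 + 1 \<noteq> 0" using m12 by simp
  then have d1: "\<delta> * (m1 + m2 + 1) = e / 4" unfolding \<delta>_def by (simp add: field_simps)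
  have dm1: "\<delta> * m1 < e / 2"
  proof -
    have "\<delta> * m1 \<le> \<delta> * (m1 + m2 + 1)" using d0 m12 by (intro mult_left_mono) auto
    then show ?thesis using d1 e by simp
  qed
  have dm2: "\<delta> * m2 < e / 2"
  proof -
    have "\<delta> * m2 \<le> \<delta> * (m1 + m2 + 1)" using d0 m12 by (intro mult_left_mono) auto
    then show ?thesis using d1 e by simp
  qed
  obtain s where s: "good s" "s \<in> borel_measurable borel" "\<And>t. t\<in>{0..<T0} \<Longrightarrow> \<bar>f t - s t\<bar> \<le> \<delta>"
    using approx[OF d0] by blast
  have [measurable]: "s \<in> borel_measurable borel" by (rule s(2))
  obtain h where h: "continuous_on UNIV h" "periodic_fun T0 h"
     "(\<integral>\<^sup>+t. ennreal \<bar>h t - s t\<bar> \<partial>M1) < ennreal (e/2)" "(\<integral>\<^sup>+t. ennreal \<bar>h t - s t\<bar> \<partial>M2) < ennreal (e/2)"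
    using s(1) e unfolding good_def by (meson half_gt_zero)
  have [measurable]: "h \<in> borel_measurable borel" using h cont_borel by auto
  show "\<exists>h. continuous_on UNIV h \<and> periodic_fun T0 h \<and>
      (\<integral>\<^sup>+t. ennreal \<bar>h t - f t\<bar> \<partial>M1) < ennreal e \<and> (\<integral>\<^sup>+t. ennreal \<bar>h t - f t\<bar> \<partial>M2) < ennreal e"
  proof (intro exI conjI)
    show "continuous_on UNIV h" "periodic_fun T0 h" using h by auto
    have "(\<integral>\<^sup>+t. ennreal \<bar>h t - f t\<bar> \<partial>M1) \<le> (\<integral>\<^sup>+t. ennreal \<bar>h t - s t\<bar> \<partial>M1) + ennreal \<delta> * emeasure M1 (space M1)"
      using s(3) space_M[OF s1] by (intro nn_unif m1) auto
    also have "ennreal \<delta> * emeasure M1 (space M1) = ennreal (\<delta> * m1)"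
      unfolding m1_def using d0 by (simp add: M1.emeasure_eq_measure ennreal_mult)
    also have "(\<integral>\<^sup>+t. ennreal \<bar>h t - s t\<bar> \<partial>M1) + ennreal (\<delta> * m1) < ennreal (e/2) + ennreal (e/2)"
    proof (intro add_strict_mono)
      show "ennreal (\<delta> * m1) < ennreal (e/2)" using dm1 e by (intro ennreal_lessI) auto
    qed (use h in auto)
    finally show "(\<integral>\<^sup>+t. ennreal \<bar>h t - f t\<bar> \<partial>M1) < ennreal e" using e
      by (simp add: ennreal_plus[symmetric] del: ennreal_plus)
    have "(\<integral>\<^sup>+t. ennreal \<bar>h t - f t\<bar> \<partial>M2) \<le> (\<integral>\<^sup>+t. ennreal \<bar>h t - s t\<bar> \<partial>M2) + ennreal \<delta> * emeasure M2 (space M2)"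
      using s(3) space_M[OF s2] by (intro nn_unif m2) auto
    also have "ennreal \<delta> * emeasure M2 (space M2) = ennreal (\<delta> * m2)"
      unfolding m2_def using d0 by (simp add: M2.emeasure_eq_measure ennreal_mult)
    also have "(\<integral>\<^sup>+t. ennreal \<bar>h t - s t\<bar> \<partial>M2) + ennreal (\<delta> * m2) < ennreal (e/2) + ennreal (e/2)"
    proof (intro add_strict_mono)
      show "ennreal (\<delta> * m2) < ennreal (e/2)" using dm2 e by (intro ennreal_lessI) auto
    qed (use h in auto)
    finally show "(\<integral>\<^sup>+t. ennreal \<bar>h t - f t\<bar> \<partial>M2) < ennreal e" using e
      by (simp add: ennreal_plus[symmetric] del: ennreal_plus)
  qed
qed

lemma good_ind:
  assumes A: "A \<in> sets (circ T0)"
  shows "good (indicator A)"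
  unfolding good_def
proof (intro allI impI)
  fix e :: real assume e: "e > 0"
  have e4: "e / 4 > 0" using e by simp
  have sp1: "space M1 = {0..<T0}" and sp2: "space M2 = {0..<T0}" using space_M s1 s2 by auto
  have A1: "A \<in> sets M1" and A2: "A \<in> sets M2" using A s1 s2 by auto
  have C1: "space M1 - A \<in> sets M1" using A1 by auto
  have C2: "space M2 - A \<in> sets M2" using A2 by auto
  obtain K1 where K1: "compact K1" "K1 \<subseteq> A" "measure M1 (A - K1) < e/4"
    using inner_circ[OF s1 fm1 A1 e4] by blast
  obtain K2 where K2: "compact K2" "K2 \<subseteq> A" "measure M2 (A - K2) < e/4"
    using inner_circ[OF s2 fm2 A2 e4] by blast
  obtain L1 where L1: "compact L1" "L1 \<subseteq> space M1 - A" "measure M1 ((space M1 - A) - L1) < e/4"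
    using inner_circ[OF s1 fm1 C1 e4] by blast
  obtain L2 where L2: "compact L2" "L2 \<subseteq> space M2 - A" "measure M2 ((space M2 - A) - L2) < e/4"
    using inner_circ[OF s2 fm2 C2 e4] by blast
  define K where "K = K1 \<union> K2"
  define L where "L = L1 \<union> L2"
  have AS: "A \<subseteq> {0..<T0}" using A sets_circ_iff by blast
  have K: "compact K" "K \<subseteq> A" using K1 K2 unfolding K_def by auto
  have L: "compact L" "L \<subseteq> {0..<T0} - A" using L1 L2 sp1 sp2 unfolding L_def by auto
  have cK: "closed (ecirc T0 ` K)"
    by (intro compact_imp_closed compact_continuous_image continuous_on_subset[OF ecirc_cont] K) auto
  have cL: "closed (ecirc T0 ` L)"
    by (intro compact_imp_closed compact_continuous_image continuous_on_subset[OF ecirc_cont] L) auto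
  have disj: "ecirc T0 ` K \<inter> ecirc T0 ` L = {}"
  proof (rule ccontr)
    assume "ecirc T0 ` K \<inter> ecirc T0 ` L \<noteq> {}"
    then obtain a b where ab: "a \<in> K" "b \<in> L" "ecirc T0 a = ecirc T0 b" by blast
    then have "a = b" using K L AS T0 by (intro ecirc_inj[of T0 a b]) auto
    then show False using ab K L by auto
  qed
  obtain g0 :: "complex \<Rightarrow> real" where g0: "continuous_on UNIV g0" "\<And>x. g0 x \<in> closed_segment 1 0"
    "\<And>x. x \<in> ecirc T0 ` K \<Longrightarrow> g0 x = 1" "\<And>x. x \<in> ecirc T0 ` L \<Longrightarrow> g0 x = 0"
    using Urysohn[OF cK cL disj] by blast
  define h where "h t = g0 (ecirc T0 t)" for t
  have hc: "continuous_on UNIV h" unfolding h_def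
    by (rule continuous_on_compose2[OF g0(1) ecirc_cont]) auto
  have [measurable]: "h \<in> borel_measurable borel" using hc cont_borel by auto
  have h01: "\<And>t. h t \<in> {0..1}" using g0(2) unfolding h_def by (simp add: closed_segment_eq_real_ivl)
  have hK: "\<And>t. t \<in> K \<Longrightarrow> h t = 1" and hL: "\<And>t. t \<in> L \<Longrightarrow> h t = 0"
    using g0(3,4) unfolding h_def by auto
  have K1s: "K1 \<in> sets M1" using K1 AS s1 by (auto simp: sets_circ_iff compact_imp_closed borel_closed)
  have K2s: "K2 \<in> sets M2" using K2 AS s2 by (auto simp: sets_circ_iff compact_imp_closed borel_closed)
  have L1s: "L1 \<in> sets M1" using L1 sp1 s1 by (auto simp: sets_circ_iff compact_imp_closed borel_closed)
  have L2s: "L2 \<in> sets M2" using L2 sp2 s2 by (auto simp: sets_circ_iff compact_imp_closed borel_closed)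
  have Ksets: "K \<in> sets (circ T0)" using K AS by (auto simp: sets_circ_iff compact_imp_closed borel_closed)
  have Lsets: "L \<in> sets (circ T0)" using L by (auto simp: sets_circ_iff compact_imp_closed borel_closed)
  show "\<exists>h. continuous_on UNIV h \<and> periodic_fun T0 h \<and>
      (\<integral>\<^sup>+t. ennreal \<bar>h t - indicator A t\<bar> \<partial>M1) < ennreal e \<and> (\<integral>\<^sup>+t. ennreal \<bar>h t - indicator A t\<bar> \<partial>M2) < ennreal e"
  proof (intro exI conjI)
    show "continuous_on UNIV h" by (rule hc)
    show "periodic_fun T0 h" unfolding periodic_fun_def h_def using ecirc_per T0 by auto
    interpret M1: finite_measure M1 by (rule fm1)
    interpret M2: finite_measure M2 by (rule fm2)
    have "(\<integral>\<^sup>+t. ennreal \<bar>h t - indicator A t\<bar> \<partial>M1) \<le> emeasure M1 (A - K) + emeasure M1 ((space M1 - A) - L)"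
      using Ksets Lsets A1 K L sp1 s1 by (intro ind_bound m1 h01 hK hL) auto
    also have "\<dots> \<le> emeasure M1 (A - K1) + emeasure M1 ((space M1 - A) - L1)"
      using A1 C1 K1s L1s unfolding K_def L_def by (intro add_mono emeasure_mono) auto
    also have "\<dots> = ennreal (measure M1 (A - K1)) + ennreal (measure M1 ((space M1 - A) - L1))"
      by (simp add: M1.emeasure_eq_measure)
    also have "\<dots> < ennreal (e/4) + ennreal (e/4)"
      using K1 L1 e by (intro add_strict_mono) (auto simp: ennreal_lessI)
    also have "\<dots> \<le> ennreal e" using e by (simp add: ennreal_plus[symmetric] del: ennreal_plus)
    finally show "(\<integral>\<^sup>+t. ennreal \<bar>h t - indicator A t\<bar> \<partial>M1) < ennreal e" .
    have "(\<integral>\<^sup>+t. ennreal \<bar>h t - indicator A t\<bar> \<partial>M2) \<le> emeasure M2 (A - K) + emeasure M2 ((space M2 - A) - L)"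
      using Ksets Lsets A2 K L sp2 s2 by (intro ind_bound m2 h01 hK hL) auto
    also have "\<dots> \<le> emeasure M2 (A - K2) + emeasure M2 ((space M2 - A) - L2)"
      using A2 C2 K2s L2s unfolding K_def L_def by (intro add_mono emeasure_mono) auto
    also have "\<dots> = ennreal (measure M2 (A - K2)) + ennreal (measure M2 ((space M2 - A) - L2))"
      by (simp add: M2.emeasure_eq_measure)
    also have "\<dots> < ennreal (e/4) + ennreal (e/4)"
      using K2 L2 e by (intro add_strict_mono) (auto simp: ennreal_lessI)
    also have "\<dots> \<le> ennreal e" using e by (simp add: ennreal_plus[symmetric] del: ennreal_plus)
    finally show "(\<integral>\<^sup>+t. ennreal \<bar>h t - indicator A t\<bar> \<partial>M2) < ennreal e" .
  qed
qed

lemma good_bdd: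
  assumes [measurable]: "f \<in> borel_measurable borel" and B: "\<And>t. \<bar>f t\<bar> \<le> B"
  shows "good f"
proof (rule good_unif[OF assms(1)])
  fix \<delta> :: real assume d: "\<delta> > 0"
  obtain n :: nat where n: "1/\<delta> < real n" using reals_Archimedean2 by blast
  define r where "r = real n"
  have r: "r > 0" using n d unfolding r_def by (meson dual_order.strict_trans zero_less_divide_1_iff)
  have "1 < r * \<delta>" using n d unfolding r_def by (simp add: field_simps)
  then have rd: "1 / r \<le> \<delta>" using r by (simp add: field_simps)
  define N where "N = \<lceil>r * B\<rceil> + 1"
  define A where "A k = {t \<in> {0..<T0}. \<lfloor>r * f t\<rfloor> = k}" for k :: int
  define s where "s t = (\<Sum>k\<in>{-N..N}. (real_of_int k / r) * indicator (A k) t)" for t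
  have Ab: "A k \<in> sets borel" for k unfolding A_def by measurable
  have Ac: "A k \<in> sets (circ T0)" for k using Ab[of k] by (auto simp: sets_circ_iff A_def)
  have Am: "indicator (A k) \<in> borel_measurable borel" for k using Ab[of k] by simp
  have sm: "s \<in> borel_measurable borel" unfolding s_def using Am by measurable
  have "good (\<lambda>t. \<Sum>k\<in>{-N..N}. (real_of_int k / r) * indicator (A k) t)"
    using Am good_ind[OF Ac] by (intro good_sum good_scale) auto
  then have gs: "good s" unfolding s_def[abs_def] by simp
  have bd: "\<bar>f t - s t\<bar> \<le> \<delta>" if t: "t \<in> {0..<T0}" for t
  proof -
    define x where "x = r * f t"
    have fl: "real_of_int \<lfloor>x\<rfloor> \<le> x" "x < real_of_int \<lfloor>x\<rfloor> + 1" by linarith+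
    have ce: "r * B \<le> real_of_int \<lceil>r * B\<rceil>" by linarith
    have "\<bar>x\<bar> \<le> r * B" unfolding x_def using r B[of t] by (simp add: abs_mult)
    then have xb: "x \<le> r * B" "- x \<le> r * B" by (simp_all add: abs_le_iff)
    have i1: "real_of_int \<lfloor>x\<rfloor> \<le> real_of_int \<lceil>r*B\<rceil> + 1" using fl ce xb by linarith
    have i2: "- real_of_int \<lceil>r*B\<rceil> - 1 \<le> real_of_int \<lfloor>x\<rfloor>" using fl ce xb by linarith
    have "real_of_int \<lfloor>x\<rfloor> \<le> real_of_int N" "real_of_int (- N) \<le> real_of_int \<lfloor>x\<rfloor>"
      using i1 i2 unfolding N_def by simp_all
    then have inN: "\<lfloor>x\<rfloor> \<in> {-N..N}" by (simp only: of_int_le_iff atLeastAtMost_iff)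
    have "s t = (\<Sum>k\<in>{-N..N}. if \<lfloor>x\<rfloor> = k then real_of_int k / r else 0)"
      unfolding s_def using that by (intro sum.cong) (auto simp: A_def indicator_def x_def)
    also have "\<dots> = real_of_int \<lfloor>x\<rfloor> / r" using inN by (simp add: sum.delta')
    finally have st: "s t = real_of_int \<lfloor>x\<rfloor> / r" .
    have "f t - s t = (x - real_of_int \<lfloor>x\<rfloor>) / r" using r unfolding st x_def by (simp add: field_simps)
    moreover have "0 \<le> (x - real_of_int \<lfloor>x\<rfloor>) / r" using fl r by simp
    moreover have "(x - real_of_int \<lfloor>x\<rfloor>) / r \<le> 1 / r" using fl r by (intro divide_right_mono) linarith+
    ultimately show ?thesis using rd by simp
  qed
  show "\<exists>s. good s \<and> s \<in> borel_measurable borel \<and> (\<forall>t\<in>{0..<T0}. \<bar>f t - s t\<bar> \<le> \<delta>)"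
    using gs sm bd by blast
qed

lemma approx:
  assumes [measurable]: "f \<in> borel_measurable borel" and B: "\<And>t. \<bar>f t\<bar> \<le> B" and e: "e > 0"
  shows "\<exists>h. continuous_on UNIV h \<and> periodic_fun T0 h \<and> (\<forall>t. \<bar>h t\<bar> \<le> B) \<and>
     (\<integral>\<^sup>+t. ennreal \<bar>h t - f t\<bar> \<partial>M1) < ennreal e \<and> (\<integral>\<^sup>+t. ennreal \<bar>h t - f t\<bar> \<partial>M2) < ennreal e"
proof -
  have "good f" by (rule good_bdd[OF assms(1) B])
  then obtain g where g: "continuous_on UNIV g" "periodic_fun T0 g"
     "(\<integral>\<^sup>+t. ennreal \<bar>g t - f t\<bar> \<partial>M1) < ennreal e" "(\<integral>\<^sup>+t. ennreal \<bar>g t - f t\<bar> \<partial>M2) < ennreal e"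
    using e unfolding good_def by blast
  define h where "h t = max (- B) (min B (g t))" for t
  have B0: "B \<ge> 0" using B[of 0] by simp
  have pw: "ennreal \<bar>h t - f t\<bar> \<le> ennreal \<bar>g t - f t\<bar>" for t
    using B[of t] unfolding h_def by (intro ennreal_leI) (auto simp: max_def min_def)
  show ?thesis
  proof (intro exI conjI)
    show "continuous_on UNIV h" unfolding h_def using g(1) by (intro continuous_intros)
    show "periodic_fun T0 h" using g(2) unfolding h_def periodic_fun_def by simp
    show "\<forall>t. \<bar>h t\<bar> \<le> B" using B0 unfolding h_def by auto
    have "(\<integral>\<^sup>+t. ennreal \<bar>h t - f t\<bar> \<partial>M1) \<le> (\<integral>\<^sup>+t. ennreal \<bar>g t - f t\<bar> \<partial>M1)"
      by (intro nn_integral_mono pw)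
    then show "(\<integral>\<^sup>+t. ennreal \<bar>h t - f t\<bar> \<partial>M1) < ennreal e"
      using g(3) by (rule le_less_trans)
    have "(\<integral>\<^sup>+t. ennreal \<bar>h t - f t\<bar> \<partial>M2) \<le> (\<integral>\<^sup>+t. ennreal \<bar>g t - f t\<bar> \<partial>M2)"
      by (intro nn_integral_mono pw)
    then show "(\<integral>\<^sup>+t. ennreal \<bar>h t - f t\<bar> \<partial>M2) < ennreal e"
      using g(4) by (rule le_less_trans)
  qed
qed

end

definition gfun :: "real \<Rightarrow> real \<Rightarrow> real \<Rightarrow> real" where
  "gfun q p x = q * x - p * (exp x - 1)"

definition fstar :: "nat \<Rightarrow> real \<Rightarrow> real \<Rightarrow> real" where
  "fstar n q p = (if p = 0 then (if q = 0 then 0 else real n)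
      else if q = 0 then - real n else max (- real n) (min (real n) (ln (q / p))))"

lemma exp_tangent: "exp b * (1 + a - b) \<le> exp (a::real)"
proof -
  have "1 + (a - b) \<le> exp (a - b)" by (rule exp_ge_add_one_self)
  then have "exp b * (1 + (a - b)) \<le> exp b * exp (a - b)" by (intro mult_left_mono) auto
  also have "exp b * exp (a - b) = exp a" by (simp add: exp_diff)
  finally show ?thesis by (simp add: algebra_simps)
qed

lemma gfun_le_Phi:
  assumes q: "q \<ge> 0" and p: "p \<ge> 0"
  shows "ennreal (gfun q p x) \<le> Phi q p"
proof (cases "q = 0")
  case True
  have "- p * (exp x - 1) \<le> p" using p by (simp add: algebra_simps)
  then show ?thesis using True p by (simp add: Phi_def gfun_def ennreal_leI)
next
  case qn: False
  show ?thesis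
  proof (cases "p = 0")
    case True then show ?thesis using qn by (simp add: Phi_def)
  next
    case pn: False
    have qp: "q > 0" "p > 0" using q p qn pn by auto
    define y where "y = ln (q / p)"
    have ey: "exp y = q / p" using qp unfolding y_def by simp
    have "exp y * (1 + x - y) \<le> exp x" by (rule exp_tangent)
    then have "p * (exp y * (1 + x - y)) \<le> p * exp x" using qp by (intro mult_left_mono) auto
    also have "p * (exp y * (1 + x - y)) = q * (1 + x - y)" using ey qp by simp
    finally have "gfun q p x \<le> q * y - (q - p)" unfolding gfun_def by (simp add: algebra_simps)
    then show ?thesis using qn pn unfolding Phi_def y_def by (simp add: ennreal_leI)
  qed
qed

lemma gfun_mono_below:
  assumes qp: "q > 0" "p > 0" and x: "x1 \<le> x2" "x2 \<le> ln (q / p)"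
  shows "gfun q p x1 \<le> gfun q p x2"
proof -
  have "exp x2 * (1 + x1 - x2) \<le> exp x1" by (rule exp_tangent)
  then have "exp x2 - exp x1 \<le> exp x2 * (x2 - x1)" by (simp add: algebra_simps)
  also have "\<dots> \<le> exp (ln (q / p)) * (x2 - x1)" using x by (intro mult_right_mono) auto
  also have "\<dots> = (q / p) * (x2 - x1)" using qp by simp
  finally have "p * (exp x2 - exp x1) \<le> p * ((q / p) * (x2 - x1))" using qp by (intro mult_left_mono) auto
  also have "\<dots> = q * (x2 - x1)" using qp by simp
  finally show ?thesis unfolding gfun_def by (simp add: algebra_simps)
qed

lemma gfun_mono_above:
  assumes qp: "q > 0" "p > 0" and x: "ln (q / p) \<le> x1" "x1 \<le> x2"
  shows "gfun q p x2 \<le> gfun q p x1"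
proof -
  have "exp x1 * (1 + x2 - x1) \<le> exp x2" by (rule exp_tangent)
  then have "exp x1 * (x2 - x1) \<le> exp x2 - exp x1" by (simp add: algebra_simps)
  moreover have "exp (ln (q / p)) * (x2 - x1) \<le> exp x1 * (x2 - x1)" using x by (intro mult_right_mono) auto
  moreover have "exp (ln (q / p)) = q / p" using qp by simp
  ultimately have "(q / p) * (x2 - x1) \<le> exp x2 - exp x1" by simp
  then have "p * ((q / p) * (x2 - x1)) \<le> p * (exp x2 - exp x1)" using qp by (intro mult_left_mono) auto
  moreover have "p * ((q / p) * (x2 - x1)) = q * (x2 - x1)" using qp by simp
  ultimately show ?thesis unfolding gfun_def by (simp add: algebra_simps)
qed

lemma fstar_props:
  assumes q: "q \<ge> 0" and p: "p \<ge> 0"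
  shows "0 \<le> gfun q p (fstar n q p)" "gfun q p (fstar n q p) \<le> gfun q p (fstar (Suc n) q p)"
proof -
  have "0 \<le> gfun q p (fstar n q p) \<and> gfun q p (fstar n q p) \<le> gfun q p (fstar (Suc n) q p)"
  proof (cases "p = 0")
    case True then show ?thesis using q by (simp add: fstar_def gfun_def)
  next
    case pn: False
    show ?thesis
    proof (cases "q = 0")
      case True
      have "exp (- real (Suc n)) \<le> exp (- real n)" by simp
      moreover have "exp (- real n) \<le> 1" by simp
      ultimately show ?thesis using True pn p
        by (auto simp: fstar_def gfun_def algebra_simps intro: mult_left_mono)
    next
      case qn: False
      have qp: "q > 0" "p > 0" using q p qn pn by auto
      define y where "y = ln (q / p)"
      have g0: "gfun q p 0 = 0" by (simp add: gfun_def)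
      have fs: "fstar k q p = max (- real k) (min (real k) y)" for k using qn pn by (simp add: fstar_def y_def)
      show ?thesis
      proof (cases "y \<ge> 0")
        case True
        have c: "fstar k q p = min (real k) y" for k using True fs[of k] by simp
        have a: "gfun q p 0 \<le> gfun q p (fstar n q p)" unfolding c using True qp
          by (intro gfun_mono_below) (auto simp: y_def)
        have b: "gfun q p (fstar n q p) \<le> gfun q p (fstar (Suc n) q p)" unfolding c using True qp
          by (intro gfun_mono_below) (auto simp: y_def)
        show ?thesis using a b g0 by simp
      next
        case False
        have c: "fstar k q p = max (- real k) y" for k using False fs[of k] by simp
        have a: "gfun q p 0 \<le> gfun q p (fstar n q p)" unfolding c using False qp
          by (intro gfun_mono_above) (auto simp: y_def)
        have b: "gfun q p (fstar n q p) \<le> gfun q p (fstar (Suc n) q p)" unfolding c using False qp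
          by (intro gfun_mono_above) (auto simp: y_def)
        show ?thesis using a b g0 by simp
      qed
    qed
  qed
  then show "0 \<le> gfun q p (fstar n q p)" "gfun q p (fstar n q p) \<le> gfun q p (fstar (Suc n) q p)" by auto
qed

lemma fstar_bound: "\<bar>fstar n q p\<bar> \<le> real n"
  by (auto simp: fstar_def)

lemma fstar_lim:
  assumes q: "q \<ge> 0" and p: "p \<ge> 0"
  shows "(\<lambda>n. ennreal (gfun q p (fstar n q p))) \<longlonglongrightarrow> Phi q p"
proof (cases "p = 0")
  case pz: True
  show ?thesis
  proof (cases "q = 0")
    case True then show ?thesis using pz by (simp add: fstar_def gfun_def Phi_def)
  next
    case False
    then have qp: "q > 0" using q by simp
    have "filterlim (\<lambda>n. q * real n) at_top sequentially"
      by (rule filterlim_tendsto_pos_mult_at_top[OF tendsto_const qp filterlim_real_sequentially])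
    then have "(\<lambda>n. ennreal (q * real n)) \<longlonglongrightarrow> top" by (simp add: ennreal_tendsto_top_eq_at_top)
    then show ?thesis using pz False by (simp add: fstar_def gfun_def Phi_def)
  qed
next
  case pn: False
  show ?thesis
  proof (cases "q = 0")
    case True
    have e: "exp (- real n) = exp (-1) ^ n" for n using exp_of_nat_mult[of n "-1"] by simp
    have "exp (-1::real) < exp 0" by (subst exp_less_cancel_iff) simp
    then have "norm (exp (-1::real)) < 1" by simp
    then have l0: "(\<lambda>n. exp (-1::real) ^ n) \<longlonglongrightarrow> 0" by (rule LIMSEQ_power_zero)
    have "(\<lambda>n. p - p * exp (-1::real) ^ n) \<longlonglongrightarrow> p - p * 0"
      by (rule tendsto_diff[OF tendsto_const tendsto_mult_left[OF l0]])
    then have "(\<lambda>n. ennreal (p - p * exp (-1::real) ^ n)) \<longlonglongrightarrow> ennreal p"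
      by (intro tendsto_ennrealI) simp
    moreover have "gfun q p (fstar n q p) = p - p * exp (-1::real) ^ n" for n
      using True pn by (simp add: fstar_def gfun_def e algebra_simps)
    ultimately show ?thesis using True by (simp add: Phi_def)
  next
    case qn: False
    have qp: "q > 0" "p > 0" using q p qn pn by auto
    define y where "y = ln (q / p)"
    have ev: "eventually (\<lambda>n. ennreal (gfun q p (fstar n q p)) = Phi q p) sequentially"
      unfolding eventually_sequentially
    proof (intro exI allI impI)
      fix n assume n: "n \<ge> nat \<lceil>\<bar>y\<bar>\<rceil>"
      then have "real n \<ge> \<bar>y\<bar>" by linarith
      then have "fstar n q p = y" using qn pn by (auto simp: fstar_def y_def)
      moreover have "gfun q p y = q * ln (q / p) - (q - p)"
        using qp unfolding gfun_def y_def by (simp add: algebra_simps)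
      ultimately show "ennreal (gfun q p (fstar n q p)) = Phi q p"
        using qn pn by (simp add: Phi_def)
    qed
    show ?thesis by (rule tendsto_eventually[OF ev])
  qed
qed


lemma int_bdd:
  fixes f :: "'a \<Rightarrow> real"
  assumes "finite_measure M" "f \<in> borel_measurable M" "\<And>t. t \<in> space M \<Longrightarrow> \<bar>f t\<bar> \<le> B"
  shows "integrable M f"
  using assms by (intro finite_measure.integrable_const_bound[where B=B]) (auto intro: AE_I2)

lemma int_diff_abs:
  fixes f1 f2 :: "'a \<Rightarrow> real"
  assumes "integrable M f1" "integrable M f2"
  shows "integral\<^sup>L M f1 - integral\<^sup>L M f2 \<le> (\<integral>t. \<bar>f1 t - f2 t\<bar> \<partial>M)"
proof -
  have "integral\<^sup>L M f1 - integral\<^sup>L M f2 = (\<integral>t. f1 t - f2 t \<partial>M)" using assms by simp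
  also have "\<dots> \<le> \<bar>\<integral>t. f1 t - f2 t \<partial>M\<bar>" by (rule abs_ge_self)
  also have "\<dots> \<le> (\<integral>t. \<bar>f1 t - f2 t\<bar> \<partial>M)" using integral_norm_bound[of M "\<lambda>t. f1 t - f2 t"] by simp
  finally show ?thesis .
qed

lemma exp_lip:
  fixes a b Bd :: real
  assumes "\<bar>a\<bar> \<le> Bd" "\<bar>b\<bar> \<le> Bd"
  shows "\<bar>exp a - exp b\<bar> \<le> exp Bd * \<bar>a - b\<bar>"
proof -
  have *: "exp v - exp u \<le> exp Bd * (v - u)" if "u \<le> v" "v \<le> Bd" for u v :: real
  proof -
    have "exp v * (1 + u - v) \<le> exp u" by (rule exp_tangent)
    then have "exp v - exp u \<le> exp v * (v - u)" by (simp add: algebra_simps)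
    also have "\<dots> \<le> exp Bd * (v - u)" using that by (intro mult_right_mono) auto
    finally show ?thesis .
  qed
  show ?thesis
  proof (cases "a \<le> b")
    case True
    have h: "exp b - exp a \<le> exp Bd * (b - a)" using True assms by (intro *) (auto simp: abs_le_iff)
    have "exp a \<le> exp b" using True by simp
    then have "\<bar>exp a - exp b\<bar> = exp b - exp a" "\<bar>a - b\<bar> = b - a" using True by auto
    then show ?thesis using h by simp
  next
    case False
    have h: "exp a - exp b \<le> exp Bd * (a - b)" using False assms by (intro *) (auto simp: abs_le_iff)
    have "exp b \<le> exp a" using False by simp
    then have "\<bar>exp a - exp b\<bar> = exp a - exp b" "\<bar>a - b\<bar> = a - b" using False by auto
    then show ?thesis using h by simp
  qed
qed

lemma circ_int: "integral\<^sup>L (circ T0) (f::real\<Rightarrow>real) = (\<integral>t\<in>{0..<T0}. f t \<partial>lborel)"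
  unfolding circ_def set_lebesgue_integral_def using integral_restrict_space[of "{0..<T0}" lborel f] by simp

lemma circ_nn: "integral\<^sup>N (circ T0) f = (\<integral>\<^sup>+t\<in>{0..<T0}. f t \<partial>lborel)"
  unfolding circ_def by (subst nn_integral_restrict_space) auto

lemma fin_circ: "T0 \<ge> 0 \<Longrightarrow> finite_measure (circ T0)"
  unfolding circ_def by (intro finite_measureI) (auto simp: space_restrict_space emeasure_restrict_space)

lemma meas_lborel_circ: "f \<in> borel_measurable lborel \<Longrightarrow> f \<in> borel_measurable (circ T0)"
  unfolding circ_def by (rule measurable_restrict_space1)

lemma dens_int:
  assumes fm: "finite_measure (density (circ T0) (\<lambda>t. ennreal (f t)))"
    and f: "f \<in> borel_measurable (circ T0)" and nn: "\<And>t. 0 \<le> f t"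
  shows "integrable (circ T0) f"
proof (rule integrableI_bounded)
  show "f \<in> borel_measurable (circ T0)" by fact
  have "emeasure (density (circ T0) (\<lambda>t. ennreal (f t))) (space (circ T0)) = (\<integral>\<^sup>+t. ennreal (f t) * indicator (space (circ T0)) t \<partial>circ T0)"
    using f by (intro emeasure_density) auto
  also have "\<dots> = (\<integral>\<^sup>+t. ennreal (norm (f t)) \<partial>circ T0)"
    using nn by (intro nn_integral_cong) auto
  finally have "(\<integral>\<^sup>+t. ennreal (norm (f t)) \<partial>circ T0) = emeasure (density (circ T0) (\<lambda>t. ennreal (f t))) (space (density (circ T0) (\<lambda>t. ennreal (f t))))"
    by simp
  then show "(\<integral>\<^sup>+t. ennreal (norm (f t)) \<partial>circ T0) < \<infinity>"
    using finite_measure.emeasure_finite[OF fm] by (simp add: less_top)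
qed

lemma int_mult_bdd:
  fixes m g :: "'a \<Rightarrow> real"
  assumes "integrable M m" "g \<in> borel_measurable M" "\<And>t. t \<in> space M \<Longrightarrow> \<bar>g t\<bar> \<le> B"
  shows "integrable M (\<lambda>t. m t * g t)"
proof (rule Bochner_Integration.integrable_bound[where f="\<lambda>t. \<bar>B\<bar> * m t"])
  show "integrable M (\<lambda>t. \<bar>B\<bar> * m t)" using assms(1) by simp
  show "(\<lambda>t. m t * g t) \<in> borel_measurable M" using assms(1,2) by measurable
  show "AE t in M. norm (m t * g t) \<le> norm (\<bar>B\<bar> * m t)"
  proof (rule AE_I2)
    fix t assume "t \<in> space M"
    then have "\<bar>g t\<bar> \<le> \<bar>B\<bar>" using assms(3) by fastforce
    then have "\<bar>g t\<bar> * \<bar>m t\<bar> \<le> \<bar>B\<bar> * \<bar>m t\<bar>" by (rule mult_right_mono) simp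
    then show "norm (m t * g t) \<le> norm (\<bar>B\<bar> * m t)"
      by (simp add: abs_mult mult.commute)
  qed
qed

lemma cont_bdd:
  assumes "continuous_on UNIV (g :: real \<Rightarrow> real)"
  shows "\<exists>B. \<forall>t\<in>{0..<T0}. \<bar>g t\<bar> \<le> B"
proof -
  have "compact (g ` {0..T0})"
    by (intro compact_continuous_image continuous_on_subset[OF assms]) auto
  then obtain B where "\<forall>x\<in>g ` {0..T0}. norm x \<le> B" using compact_imp_bounded bounded_iff by metis
  then show ?thesis by (intro exI[of _ B]) auto
qed

lemma sum_edges:
  fixes E :: "('v::finite \<times> 'v) set"
  shows "(\<Sum>y\<in>UNIV. \<Sum>z\<in>{z. (y, z) \<in> E}. h y z) = (\<Sum>(y, z)\<in>E. h y z)"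
proof -
  have "Sigma UNIV (\<lambda>y. {z. (y, z) \<in> E}) = E" by auto
  then show ?thesis by (subst sum.Sigma) auto
qed

lemma sum_edges_in:
  fixes E :: "('v::finite \<times> 'v) set"
  shows "(\<Sum>y\<in>UNIV. \<Sum>z\<in>{z. (z, y) \<in> E}. h y z) = (\<Sum>(z, y)\<in>E. h y z)"
proof -
  have "(\<Sum>y\<in>UNIV. \<Sum>z\<in>{z. (z, y) \<in> E}. h y z) = (\<Sum>(y, z)\<in>Sigma UNIV (\<lambda>y. {z. (z, y) \<in> E}). h y z)"
    by (subst sum.Sigma) auto
  also have "\<dots> = (\<Sum>(z, y)\<in>E. h y z)"
    by (rule sum.reindex_bij_witness[where i="\<lambda>(z, y). (y, z)" and j="\<lambda>(y, z). (z, y)"]) auto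
  finally show ?thesis .
qed

locale main =
  fixes T0 :: real and r :: "'v::finite \<Rightarrow> 'v \<Rightarrow> real \<Rightarrow> real"
    and \<mu> :: "'v \<Rightarrow> real measure" and Q :: "'v \<Rightarrow> 'v \<Rightarrow> real measure" and C :: real
  assumes T0: "T0 > 0" and r_nonneg: "\<And>y z t. r y z t \<ge> 0"
    and r_meas: "\<And>y z. r y z \<in> borel_measurable borel"
    and r_bd: "\<And>y z t. (y, z) \<in> edges r \<Longrightarrow> t \<in> {0..<T0} \<Longrightarrow> r y z t \<le> C"
    and C0: "C \<ge> 0"
    and MQ: "Mstar T0 (edges r) \<mu> Q"
begin

abbreviation "E \<equiv> edges r"

lemma finE: "finite E" by (rule finite_subset[OF subset_UNIV]) simp

lemma sets_mu: "sets (\<mu> y) = sets (circ T0)" and fin_mu: "finite_measure (\<mu> y)"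
  using MQ unfolding Mstar_def by auto

lemma sets_Q: "(y, z) \<in> E \<Longrightarrow> sets (Q y z) = sets (circ T0)"
  and fin_Q: "(y, z) \<in> E \<Longrightarrow> finite_measure (Q y z)"
  using MQ unfolding Mstar_def by auto

lemma space_mu: "space (\<mu> y) = {0..<T0}" using space_M[OF sets_mu] .
lemma space_Q: "(y, z) \<in> E \<Longrightarrow> space (Q y z) = {0..<T0}" using space_M[OF sets_Q] .

lemma r_circ: "r y z \<in> borel_measurable (circ T0)"
  using meas_circ[of "circ T0" T0, OF refl r_meas] .

definition Aterm :: "('v \<Rightarrow> real \<Rightarrow> real) \<Rightarrow> real" where
  "Aterm \<phi> = - (\<Sum>y\<in>UNIV. \<integral>s. deriv (\<phi> y) s \<partial>(\<mu> y)) + (\<Sum>(y, z)\<in>E. \<integral>s. (\<phi> y s - \<phi> z s) \<partial>(Q y z))"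

definition Bterm :: "('v \<Rightarrow> 'v \<Rightarrow> real \<Rightarrow> real) \<Rightarrow> real" where
  "Bterm F = (\<Sum>(y, z)\<in>E. \<integral>s. F y z s \<partial>(Q y z))
     - (\<Sum>y\<in>UNIV. \<integral>s. (\<Sum>z\<in>{z. (y, z) \<in> E}. r y z s * (exp (F y z s) - 1)) \<partial>(\<mu> y))"

lemma Ihat_split: "Ihat T0 r \<phi> F \<mu> Q = Aterm \<phi> + Bterm F"
  unfolding Ihat_def Aterm_def Bterm_def by simp

lemma Aterm0: "Aterm (\<lambda>y t. 0) = 0"
  unfolding Aterm_def by simp

lemma Bterm0: "Bterm (\<lambda>y z t. 0) = 0"
  unfolding Bterm_def by simp

lemma C1_deriv:
  assumes "C1_time T0 \<phi>"
  shows "\<exists>f'. (\<forall>t. (\<phi> y has_real_derivative f' t) (at t)) \<and> continuous_on UNIV f' \<and> (\<forall>t. deriv (\<phi> y) t = f' t)"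
proof -
  obtain f' where f': "\<forall>t. (\<phi> y has_real_derivative f' t) (at t)" "continuous_on UNIV f'"
    using assms unfolding C1_time_def by blast
  then show ?thesis using DERIV_imp_deriv by blast
qed

lemma C1_scale:
  assumes "C1_time T0 \<phi>"
  shows "C1_time T0 (\<lambda>y t. c * \<phi> y t)"
  unfolding C1_time_def
proof (intro allI conjI)
  fix y
  show "periodic_fun T0 (\<lambda>t. c * \<phi> y t)" using assms unfolding C1_time_def periodic_fun_def by simp
  obtain f' where f': "\<forall>t. (\<phi> y has_real_derivative f' t) (at t)" "continuous_on UNIV f'"
    using assms unfolding C1_time_def by blast
  show "\<exists>f'. (\<forall>t. ((\<lambda>t. c * \<phi> y t) has_real_derivative f' t) (at t)) \<and> continuous_on UNIV f'"
    using f' by (intro exI[of _ "\<lambda>t. c * f' t"] conjI allI DERIV_cmult continuous_intros) auto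
qed

lemma C1_zero: "C1_time T0 (\<lambda>y t. 0)"
  unfolding C1_time_def periodic_fun_def
  by (intro allI conjI exI[of _ "\<lambda>t. 0"]) (auto intro: DERIV_const)

lemma Aterm_scale:
  assumes "C1_time T0 \<phi>"
  shows "Aterm (\<lambda>y t. c * \<phi> y t) = c * Aterm \<phi>"
proof -
  have d: "deriv (\<lambda>t. c * \<phi> y t) s = c * deriv (\<phi> y) s" for y s
  proof -
    obtain f' where f': "\<forall>t. (\<phi> y has_real_derivative f' t) (at t)" "\<forall>t. deriv (\<phi> y) t = f' t"
      using C1_deriv[OF assms] by blast
    have "((\<lambda>t. c * \<phi> y t) has_real_derivative c * f' s) (at s)" using f' by (intro DERIV_cmult) auto
    then show ?thesis using f' DERIV_imp_deriv by metis
  qed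
  have e: "c * \<phi> y s - c * \<phi> z s = c * (\<phi> y s - \<phi> z s)" for y z s by (simp add: algebra_simps)
  have q: "(\<integral>s. (c * \<phi> y s - c * \<phi> z s) \<partial>Q y z) = c * (\<integral>s. (\<phi> y s - \<phi> z s) \<partial>Q y z)" for y z
    by (simp add: e)
  have p: "(\<integral>s. deriv (\<lambda>t. c * \<phi> y t) s \<partial>\<mu> y) = c * (\<integral>s. deriv (\<phi> y) s \<partial>\<mu> y)" for y
    by (simp add: d)
  show ?thesis unfolding Aterm_def
    by (simp add: q p case_prod_unfold sum_distrib_left[symmetric] right_diff_distrib)
qed

definition be :: "'v \<Rightarrow> 'v \<Rightarrow> (real \<Rightarrow> real) \<Rightarrow> real" where
  "be y z f = (\<integral>s. f s \<partial>(Q y z)) - (\<integral>s. r y z s * (exp (f s) - 1) \<partial>(\<mu> y))"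

lemma exp_m1_bd: "(x::real) \<le> Bd \<Longrightarrow> \<bar>exp x - 1\<bar> \<le> exp Bd + 1"
proof -
  assume "x \<le> Bd"
  then have "exp x \<le> exp Bd" by simp
  moreover have "exp x > 0" by simp
  ultimately have "- (exp Bd + 1) \<le> exp x - 1" "exp x - 1 \<le> exp Bd + 1" by linarith+
  then show ?thesis by (simp add: abs_le_iff)
qed

lemma int_r_mu:
  assumes e: "(y, z) \<in> E" and f[measurable]: "f \<in> borel_measurable borel" and b: "\<And>t. \<bar>f t\<bar> \<le> Bd"
  shows "integrable (\<mu> y) (\<lambda>s. r y z s * (exp (f s) - 1))"
proof (rule int_bdd[OF fin_mu])
  show "(\<lambda>s. r y z s * (exp (f s) - 1)) \<in> borel_measurable (\<mu> y)"
  proof (intro meas_circ[OF sets_mu])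
    note [measurable] = r_meas[of y z] f
    show "(\<lambda>s. r y z s * (exp (f s) - 1)) \<in> borel_measurable borel" by measurable
  qed
  fix t assume t: "t \<in> space (\<mu> y)"
  have "\<bar>r y z t * (exp (f t) - 1)\<bar> = r y z t * \<bar>exp (f t) - 1\<bar>" using r_nonneg by (simp add: abs_mult)
  also have "\<dots> \<le> C * (exp Bd + 1)"
    using t space_mu r_bd[OF e] r_nonneg exp_m1_bd[of "f t" Bd] b[of t] C0
    by (intro mult_mono) auto
  finally show "\<bar>r y z t * (exp (f t) - 1)\<bar> \<le> C * (exp Bd + 1)" .
qed

lemma int_Q:
  fixes f :: "real \<Rightarrow> real"
  assumes e: "(y, z) \<in> E" and f: "f \<in> borel_measurable borel" and b: "\<And>t. \<bar>f t\<bar> \<le> Bd"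
  shows "integrable (Q y z) f"
  using b f by (intro int_bdd[OF fin_Q[OF e]] meas_circ[OF sets_Q[OF e]]) auto

lemma Bterm_edges:
  assumes F: "\<And>y z. (y, z) \<in> E \<Longrightarrow> F y z \<in> borel_measurable borel"
    "\<And>y z t. (y, z) \<in> E \<Longrightarrow> \<bar>F y z t\<bar> \<le> Bd"
  shows "Bterm F = (\<Sum>(y, z)\<in>E. be y z (F y z))"
proof -
  have "(\<Sum>y\<in>UNIV. \<integral>s. (\<Sum>z\<in>{z. (y, z) \<in> E}. r y z s * (exp (F y z s) - 1)) \<partial>(\<mu> y))
      = (\<Sum>y\<in>UNIV. \<Sum>z\<in>{z. (y, z) \<in> E}. \<integral>s. r y z s * (exp (F y z s) - 1) \<partial>(\<mu> y))"
  proof (intro sum.cong refl)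
    fix y
    show "(\<integral>s. (\<Sum>z\<in>{z. (y, z) \<in> E}. r y z s * (exp (F y z s) - 1)) \<partial>(\<mu> y))
      = (\<Sum>z\<in>{z. (y, z) \<in> E}. \<integral>s. r y z s * (exp (F y z s) - 1) \<partial>(\<mu> y))"
      by (rule Bochner_Integration.integral_sum, rule int_r_mu[OF _ F(1) F(2)]) auto
  qed
  also have "\<dots> = (\<Sum>(y, z)\<in>E. \<integral>s. r y z s * (exp (F y z s) - 1) \<partial>(\<mu> y))"
    by (rule sum_edges)
  finally show ?thesis unfolding Bterm_def be_def
    by (simp add: sum_subtractf[symmetric] case_prod_unfold)
qed

lemma be_diff:
  assumes e: "(y, z) \<in> E" and f[measurable]: "f1 \<in> borel_measurable borel" "f2 \<in> borel_measurable borel"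
    and b: "\<And>t. \<bar>f1 t\<bar> \<le> Bd" "\<And>t. \<bar>f2 t\<bar> \<le> Bd"
  shows "be y z f1 - be y z f2 \<le> (\<integral>s. \<bar>f1 s - f2 s\<bar> \<partial>(Q y z)) + C * exp Bd * (\<integral>s. \<bar>f1 s - f2 s\<bar> \<partial>(\<mu> y))"
proof -
  have Bd0: "Bd \<ge> 0" using b(1)[of 0] by simp
  have i1: "(\<integral>s. f1 s \<partial>(Q y z)) - (\<integral>s. f2 s \<partial>(Q y z)) \<le> (\<integral>s. \<bar>f1 s - f2 s\<bar> \<partial>(Q y z))"
    using b by (intro int_diff_abs int_Q[OF e]) auto
  have ia: "integrable (\<mu> y) (\<lambda>s. r y z s * (exp (f2 s) - 1))" using b by (intro int_r_mu[OF e]) auto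
  have ib: "integrable (\<mu> y) (\<lambda>s. r y z s * (exp (f1 s) - 1))" using b by (intro int_r_mu[OF e]) auto
  have id: "integrable (\<mu> y) (\<lambda>s. \<bar>f1 s - f2 s\<bar>)"
  proof (rule int_bdd[OF fin_mu])
    show "(\<lambda>s. \<bar>f1 s - f2 s\<bar>) \<in> borel_measurable (\<mu> y)" by (intro meas_circ[OF sets_mu]) measurable
    show "\<bar>\<bar>f1 t - f2 t\<bar>\<bar> \<le> 2 * Bd" for t using b[of t] by simp
  qed
  have "(\<integral>s. r y z s * (exp (f2 s) - 1) \<partial>(\<mu> y)) - (\<integral>s. r y z s * (exp (f1 s) - 1) \<partial>(\<mu> y))
      \<le> (\<integral>s. \<bar>r y z s * (exp (f2 s) - 1) - r y z s * (exp (f1 s) - 1)\<bar> \<partial>(\<mu> y))"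
    by (rule int_diff_abs[OF ia ib])
  also have "\<dots> \<le> (\<integral>s. C * exp Bd * \<bar>f1 s - f2 s\<bar> \<partial>(\<mu> y))"
  proof (rule Bochner_Integration.integral_mono)
    show "integrable (\<mu> y) (\<lambda>s. \<bar>r y z s * (exp (f2 s) - 1) - r y z s * (exp (f1 s) - 1)\<bar>)"
      using ia ib by auto
    show "integrable (\<mu> y) (\<lambda>s. C * exp Bd * \<bar>f1 s - f2 s\<bar>)" using id by auto
    fix t assume t: "t \<in> space (\<mu> y)"
    have "r y z t * (exp (f2 t) - 1) - r y z t * (exp (f1 t) - 1) = r y z t * (exp (f2 t) - exp (f1 t))"
      by (simp add: algebra_simps)
    then have "\<bar>r y z t * (exp (f2 t) - 1) - r y z t * (exp (f1 t) - 1)\<bar> = r y z t * \<bar>exp (f2 t) - exp (f1 t)\<bar>"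
      using r_nonneg[of y z t] by (simp add: abs_mult)
    also have "\<dots> \<le> C * (exp Bd * \<bar>f2 t - f1 t\<bar>)"
      using t space_mu r_bd[OF e] r_nonneg exp_lip[OF b(2)[of t] b(1)[of t]] C0
      by (intro mult_mono) auto
    finally show "\<bar>r y z t * (exp (f2 t) - 1) - r y z t * (exp (f1 t) - 1)\<bar> \<le> C * exp Bd * \<bar>f1 t - f2 t\<bar>"
      by (simp add: abs_minus_commute mult.assoc)
  qed
  also have "\<dots> = C * exp Bd * (\<integral>s. \<bar>f1 s - f2 s\<bar> \<partial>(\<mu> y))" by simp
  finally show ?thesis using i1 unfolding be_def by simp
qed

abbreviation "Pset \<equiv> {(\<phi> :: 'v \<Rightarrow> real \<Rightarrow> real, F). C1_time T0 \<phi> \<and> cont_edge T0 (edges r) F}"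
abbreviation "SUPI \<equiv> (SUP (\<phi>, F) \<in> Pset. Iphi T0 r \<phi> F \<mu> Q)"

lemma le_SUPI: "(\<phi>, F) \<in> Pset \<Longrightarrow> Iphi T0 r \<phi> F \<mu> Q \<le> SUPI"
  using SUP_upper[of "(\<phi>, F)" Pset "\<lambda>(\<phi>, F). Iphi T0 r \<phi> F \<mu> Q"] by simp

lemma nn_to_int:
  assumes "integrable M f" "\<And>t. 0 \<le> f t" "(\<integral>\<^sup>+t. ennreal (f t) \<partial>M) < ennreal \<eta>"
  shows "(\<integral>t. f t \<partial>M) < \<eta>"
proof -
  have "(\<integral>\<^sup>+t. ennreal (f t) \<partial>M) = ennreal (\<integral>t. f t \<partial>M)"
    using assms(1,2) by (intro nn_integral_eq_integral) auto
  then have "ennreal (\<integral>t. f t \<partial>M) < ennreal \<eta>" using assms(3) by simp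
  moreover have "0 \<le> (\<integral>t. f t \<partial>M)" using assms(2) by simp
  ultimately show ?thesis by (simp add: ennreal_less_iff)
qed

lemma bterm_approx:
  assumes ac: "abs_cont_prob T0 \<mu>"
    and F: "\<And>y z. (y, z) \<in> E \<Longrightarrow> F y z \<in> borel_measurable borel"
      "\<And>y z t. (y, z) \<in> E \<Longrightarrow> \<bar>F y z t\<bar> \<le> Bd"
  shows "ereal (Bterm F) \<le> SUPI"
proof (rule ereal_le_epsilon2)
  fix \<epsilon> :: real assume \<epsilon>: "\<epsilon> > 0"
  define k where "k = real (card E) * (1 + C * exp Bd)"
  have k0: "k \<ge> 0" unfolding k_def using C0 by simp
  define \<eta> where "\<eta> = \<epsilon> / (k + 1)"
  have \<eta>0: "\<eta> > 0" unfolding \<eta>_def using \<epsilon> k0 by simp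
  have "\<forall>e\<in>E. \<exists>h. continuous_on UNIV h \<and> periodic_fun T0 h \<and> (\<forall>t. \<bar>h t\<bar> \<le> Bd) \<and>
     (\<integral>\<^sup>+t. ennreal \<bar>h t - F (fst e) (snd e) t\<bar> \<partial>(Q (fst e) (snd e))) < ennreal \<eta> \<and>
     (\<integral>\<^sup>+t. ennreal \<bar>h t - F (fst e) (snd e) t\<bar> \<partial>(\<mu> (fst e))) < ennreal \<eta>"
  proof
    fix e assume e: "e \<in> E"
    obtain y z where yz: "e = (y, z)" by (cases e)
    have eyz: "(y, z) \<in> E" using e yz by simp
    interpret twom T0 "Q y z" "\<mu> y"
      by (rule twom.intro[OF T0 sets_Q[OF eyz] sets_mu fin_Q[OF eyz] fin_mu])
    show "\<exists>h. continuous_on UNIV h \<and> periodic_fun T0 h \<and> (\<forall>t. \<bar>h t\<bar> \<le> Bd) \<and>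
     (\<integral>\<^sup>+t. ennreal \<bar>h t - F (fst e) (snd e) t\<bar> \<partial>(Q (fst e) (snd e))) < ennreal \<eta> \<and>
     (\<integral>\<^sup>+t. ennreal \<bar>h t - F (fst e) (snd e) t\<bar> \<partial>(\<mu> (fst e))) < ennreal \<eta>"
      using approx[OF F(1) F(2) \<eta>0] e yz by auto
  qed
  then obtain H where H: "\<forall>e\<in>E. continuous_on UNIV (H e) \<and> periodic_fun T0 (H e) \<and> (\<forall>t. \<bar>H e t\<bar> \<le> Bd) \<and>
     (\<integral>\<^sup>+t. ennreal \<bar>H e t - F (fst e) (snd e) t\<bar> \<partial>(Q (fst e) (snd e))) < ennreal \<eta> \<and>
     (\<integral>\<^sup>+t. ennreal \<bar>H e t - F (fst e) (snd e) t\<bar> \<partial>(\<mu> (fst e))) < ennreal \<eta>"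
    by (rule bchoice[THEN exE]) blast
  define G where "G y z = H (y, z)" for y z
  have Gp: "continuous_on UNIV (G y z)" "periodic_fun T0 (G y z)" "\<And>t. \<bar>G y z t\<bar> \<le> Bd"
     "(\<integral>\<^sup>+t. ennreal \<bar>G y z t - F y z t\<bar> \<partial>(Q y z)) < ennreal \<eta>"
     "(\<integral>\<^sup>+t. ennreal \<bar>G y z t - F y z t\<bar> \<partial>(\<mu> y)) < ennreal \<eta>" if "(y, z) \<in> E" for y z
    using H that unfolding G_def by force+
  have Gm: "G y z \<in> borel_measurable borel" if "(y, z) \<in> E" for y z
    using Gp(1)[OF that] cont_borel by auto
  have inP: "(\<lambda>y t. 0, G) \<in> Pset" using C1_zero Gp by (auto simp: cont_edge_def)
  have IG: "Iphi T0 r (\<lambda>y t. 0) G \<mu> Q = ereal (Bterm G)"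
    using ac by (simp add: Iphi_def Ihat_split Aterm0)
  have edge: "be y z (F y z) - be y z (G y z) \<le> \<eta> * (1 + C * exp Bd)" if e: "(y, z) \<in> E" for y z
  proof -
    have dm: "(\<lambda>t. \<bar>G y z t - F y z t\<bar>) \<in> borel_measurable borel" using Gm[OF e] F(1)[OF e] by measurable
    have bnd: "\<bar>\<bar>G y z t - F y z t\<bar>\<bar> \<le> 2 * Bd" for t
      using Gp(3)[OF e, of t] F(2)[OF e, of t] by (auto simp: abs_le_iff)
    have iQ: "integrable (Q y z) (\<lambda>t. \<bar>G y z t - F y z t\<bar>)"
      using bnd dm by (intro int_bdd[OF fin_Q[OF e], where B="2*Bd"] meas_circ[OF sets_Q[OF e]]) auto
    have iM: "integrable (\<mu> y) (\<lambda>t. \<bar>G y z t - F y z t\<bar>)"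
      using bnd dm by (intro int_bdd[OF fin_mu, where B="2*Bd"] meas_circ[OF sets_mu]) auto
    have a: "(\<integral>t. \<bar>G y z t - F y z t\<bar> \<partial>(Q y z)) < \<eta>" using nn_to_int[OF iQ _ Gp(4)[OF e]] by simp
    have b: "(\<integral>t. \<bar>G y z t - F y z t\<bar> \<partial>(\<mu> y)) < \<eta>" using nn_to_int[OF iM _ Gp(5)[OF e]] by simp
    have "be y z (F y z) - be y z (G y z) \<le> (\<integral>s. \<bar>F y z s - G y z s\<bar> \<partial>(Q y z)) + C * exp Bd * (\<integral>s. \<bar>F y z s - G y z s\<bar> \<partial>(\<mu> y))"
      using F(2)[OF e] Gp(3)[OF e] by (intro be_diff[OF e F(1)[OF e] Gm[OF e]]) auto
    also have "\<dots> \<le> \<eta> + C * exp Bd * \<eta>"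
      using a b C0 by (intro add_mono mult_left_mono) (auto simp: abs_minus_commute)
    finally show ?thesis by (simp add: algebra_simps)
  qed
  have "Bterm F - Bterm G = (\<Sum>(y, z)\<in>E. be y z (F y z) - be y z (G y z))"
    using Bterm_edges[of F Bd] Bterm_edges[of G Bd] F Gm Gp(3)
    by (simp add: sum_subtractf case_prod_unfold)
  also have "\<dots> \<le> (\<Sum>(y, z)\<in>E. \<eta> * (1 + C * exp Bd))"
    using edge by (intro sum_mono) auto
  also have "\<dots> = \<eta> * k" unfolding k_def by simp
  also have "\<dots> \<le> \<epsilon>"
  proof -
    have "\<eta> * k = \<epsilon> * (k / (k + 1))" unfolding \<eta>_def by simp
    also have "\<dots> \<le> \<epsilon> * 1" using \<epsilon> k0 by (intro mult_left_mono) auto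
    finally show ?thesis by simp
  qed
  finally have "Bterm F \<le> Bterm G + \<epsilon>" by simp
  then have "ereal (Bterm F) \<le> ereal (Bterm G) + ereal \<epsilon>" by simp
  also have "ereal (Bterm G) \<le> SUPI" using le_SUPI[OF inP] IG by simp
  finally show "ereal (Bterm F) \<le> SUPI + ereal \<epsilon>" by (simp add: add_right_mono)
qed

end

lemma flow_id:
  fixes E :: "('v::finite \<times> 'v) set" and q :: "'v \<Rightarrow> 'v \<Rightarrow> real" and \<phi> :: "'v \<Rightarrow> real"
  shows "(\<Sum>(y, z)\<in>E. q y z * (\<phi> y - \<phi> z)) =
    (\<Sum>y\<in>UNIV. ((\<Sum>z\<in>{z. (y, z) \<in> E}. q y z) - (\<Sum>z\<in>{z. (z, y) \<in> E}. q z y)) * \<phi> y)"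
proof -
  have "(\<Sum>y\<in>UNIV. ((\<Sum>z\<in>{z. (y, z) \<in> E}. q y z) - (\<Sum>z\<in>{z. (z, y) \<in> E}. q z y)) * \<phi> y)
      = (\<Sum>y\<in>UNIV. \<Sum>z\<in>{z. (y, z) \<in> E}. q y z * \<phi> y) - (\<Sum>y\<in>UNIV. \<Sum>z\<in>{z. (z, y) \<in> E}. q z y * \<phi> y)"
  proof -
    have e1: "((\<Sum>z\<in>{z. (y, z) \<in> E}. q y z) - (\<Sum>z\<in>{z. (z, y) \<in> E}. q z y)) * \<phi> y
       = (\<Sum>z\<in>{z. (y, z) \<in> E}. q y z * \<phi> y) - (\<Sum>z\<in>{z. (z, y) \<in> E}. q z y * \<phi> y)" for y
      by (simp add: left_diff_distrib sum_distrib_right)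
    show ?thesis by (simp only: e1 sum_subtractf)
  qed
  also have "\<dots> = (\<Sum>(y, z)\<in>E. q y z * \<phi> y) - (\<Sum>(z, y)\<in>E. q z y * \<phi> y)"
    by (simp only: sum_edges sum_edges_in)
  also have "\<dots> = (\<Sum>(y, z)\<in>E. q y z * (\<phi> y - \<phi> z))"
    by (simp add: right_diff_distrib sum_subtractf case_prod_unfold)
  finally show ?thesis by simp
qed

lemma ennreal_max0: "ennreal (max x 0) = ennreal x"
  by (cases "x \<ge> 0") (auto simp: max_def ennreal_neg)

lemma int_le_nn:
  fixes f :: "'a \<Rightarrow> real"
  assumes "integrable M f"
  shows "ereal (integral\<^sup>L M f) \<le> enn2ereal (\<integral>\<^sup>+t. ennreal (f t) \<partial>M)"
proof -
  have i: "integrable M (\<lambda>t. max (f t) 0)" using assms by auto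
  have "integral\<^sup>L M f \<le> (\<integral>t. max (f t) 0 \<partial>M)"
    using assms i by (intro Bochner_Integration.integral_mono) auto
  moreover have "(\<integral>\<^sup>+t. ennreal (max (f t) 0) \<partial>M) = ennreal (\<integral>t. max (f t) 0 \<partial>M)"
    using i by (intro nn_integral_eq_integral) auto
  moreover have "(\<integral>\<^sup>+t. ennreal (max (f t) 0) \<partial>M) = (\<integral>\<^sup>+t. ennreal (f t) \<partial>M)"
    by (intro nn_integral_cong) (simp add: ennreal_max0)
  moreover have "0 \<le> (\<integral>t. max (f t) 0 \<partial>M)" by simp
  ultimately show ?thesis by (simp add: enn2ereal_ennreal)
qed

lemma ennreal_sum_le:
  fixes g :: "'a \<Rightarrow> real"
  assumes "finite I"
  shows "ennreal (\<Sum>i\<in>I. g i) \<le> (\<Sum>i\<in>I. ennreal (g i))"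
proof -
  have "ennreal (\<Sum>i\<in>I. g i) \<le> ennreal (\<Sum>i\<in>I. max (g i) 0)"
    by (intro ennreal_leI sum_mono) auto
  also have "\<dots> = (\<Sum>i\<in>I. ennreal (max (g i) 0))" by (subst sum_ennreal) auto
  also have "\<dots> = (\<Sum>i\<in>I. ennreal (g i))" by (simp add: ennreal_max0)
  finally show ?thesis .
qed

context main
begin

definition dens :: "('v \<Rightarrow> real \<Rightarrow> real) \<Rightarrow> ('v \<Rightarrow> 'v \<Rightarrow> real \<Rightarrow> real) \<Rightarrow> bool" where
  "dens m q \<longleftrightarrow> mu_density T0 \<mu> m \<and>
     (\<forall>(y, z)\<in>E. q y z \<in> borel_measurable lborel \<and> (\<forall>t. 0 \<le> q y z t) \<and>
          Q y z = density (circ T0) (\<lambda>t. ennreal (q y z t)))"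

lemma Lambda_dens_D: "Lambda_dens T0 E \<mu> Q m q \<Longrightarrow> dens m q"
  unfolding Lambda_dens_def dens_def by blast

lemma fin_circ0: "finite_measure (circ T0)" using fin_circ T0 by simp

context
  fixes m q assumes d: "dens m q"
begin

lemma dm_meas: "m y \<in> borel_measurable borel" and dm_nn: "0 \<le> m y t"
  and dm_eq: "\<mu> y = density (circ T0) (\<lambda>t. ennreal (m y t))"
  using d unfolding dens_def mu_density_def by (auto simp: measurable_lborel2)

lemma dq_meas: "(y, z) \<in> E \<Longrightarrow> q y z \<in> borel_measurable borel"
  and dq_nn: "(y, z) \<in> E \<Longrightarrow> 0 \<le> q y z t"
  and dq_eq: "(y, z) \<in> E \<Longrightarrow> Q y z = density (circ T0) (\<lambda>t. ennreal (q y z t))"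
  using d unfolding dens_def by (auto simp: measurable_lborel2)

lemma mc: "f \<in> borel_measurable borel \<Longrightarrow> f \<in> borel_measurable (circ T0)"
  by (rule meas_circ[OF refl])

lemma dm_int: "integrable (circ T0) (m y)"
  using fin_mu[of y] dm_eq[of y] by (intro dens_int mc dm_meas dm_nn) auto

lemma dq_int: "(y, z) \<in> E \<Longrightarrow> integrable (circ T0) (q y z)"
  using fin_Q[of y z] dq_eq[of y z] by (intro dens_int mc dq_meas dq_nn) auto

lemma int_mu_dens: "g \<in> borel_measurable borel \<Longrightarrow> integral\<^sup>L (\<mu> y) g = (\<integral>t. m y t * g t \<partial>circ T0)"
  by (subst dm_eq) (intro integral_real_density mc dm_meas AE_I2 dm_nn)

lemma int_Q_dens: "(y, z) \<in> E \<Longrightarrow> g \<in> borel_measurable borel \<Longrightarrow> integral\<^sup>L (Q y z) g = (\<integral>t. q y z t * g t \<partial>circ T0)"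
  by (subst dq_eq) (auto intro!: integral_real_density mc dm_meas AE_I2 dq_nn dq_meas)

lemma be_dens:
  assumes e: "(y, z) \<in> E" and F[measurable]: "f \<in> borel_measurable borel" and b: "\<And>t. \<bar>f t\<bar> \<le> Bd"
  shows "integrable (circ T0) (\<lambda>t. gfun (q y z t) (m y t * r y z t) (f t))"
    "be y z f = (\<integral>t. gfun (q y z t) (m y t * r y z t) (f t) \<partial>circ T0)"
proof -
  note [measurable] = r_meas[of y z] dq_meas[OF e] dm_meas[of y]
  have sp: "space (circ T0) = {0..<T0}" by (rule space_circ)
  have i1: "integrable (circ T0) (\<lambda>t. q y z t * f t)"
    using b by (intro int_mult_bdd[OF dq_int[OF e]] mc) auto
  have i2: "integrable (circ T0) (\<lambda>t. m y t * (r y z t * (exp (f t) - 1)))"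
  proof (intro int_mult_bdd[OF dm_int] mc)
    show "(\<lambda>t. r y z t * (exp (f t) - 1)) \<in> borel_measurable borel" by measurable
    fix t assume t: "t \<in> space (circ T0)"
    have "\<bar>r y z t * (exp (f t) - 1)\<bar> = r y z t * \<bar>exp (f t) - 1\<bar>" using r_nonneg by (simp add: abs_mult)
    also have "\<dots> \<le> C * (exp Bd + 1)"
      using t sp r_bd[OF e] r_nonneg exp_m1_bd[of "f t" Bd] b[of t] C0
      by (intro mult_mono) auto
    finally show "\<bar>r y z t * (exp (f t) - 1)\<bar> \<le> C * (exp Bd + 1)" .
  qed
  have g: "gfun (q y z t) (m y t * r y z t) (f t) = q y z t * f t - m y t * (r y z t * (exp (f t) - 1))" for t
    by (simp add: gfun_def algebra_simps)
  show "integrable (circ T0) (\<lambda>t. gfun (q y z t) (m y t * r y z t) (f t))"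
    unfolding g using i1 i2 by auto
  have "be y z f = (\<integral>t. q y z t * f t \<partial>circ T0) - (\<integral>t. m y t * (r y z t * (exp (f t) - 1)) \<partial>circ T0)"
  proof -
    have a: "integral\<^sup>L (Q y z) f = (\<integral>t. q y z t * f t \<partial>circ T0)" by (rule int_Q_dens[OF e F])
    have b: "integral\<^sup>L (\<mu> y) (\<lambda>t. r y z t * (exp (f t) - 1)) = (\<integral>t. m y t * (r y z t * (exp (f t) - 1)) \<partial>circ T0)"
      by (rule int_mu_dens) measurable
    show ?thesis unfolding be_def a b ..
  qed
  also have "\<dots> = (\<integral>t. gfun (q y z t) (m y t * r y z t) (f t) \<partial>circ T0)"
    unfolding g using i1 i2 by simp
  finally show "be y z f = (\<integral>t. gfun (q y z t) (m y t * r y z t) (f t) \<partial>circ T0)" .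
qed

lemma Bterm_dens:
  assumes F: "\<And>y z. (y, z) \<in> E \<Longrightarrow> F y z \<in> borel_measurable borel"
      "\<And>y z t. (y, z) \<in> E \<Longrightarrow> \<bar>F y z t\<bar> \<le> Bd"
  shows "integrable (circ T0) (\<lambda>t. \<Sum>(y, z)\<in>E. gfun (q y z t) (m y t * r y z t) (F y z t))"
    "Bterm F = (\<integral>t. (\<Sum>(y, z)\<in>E. gfun (q y z t) (m y t * r y z t) (F y z t)) \<partial>circ T0)"
proof -
  have ie: "integrable (circ T0) (\<lambda>t. gfun (q (fst e) (snd e) t) (m (fst e) t * r (fst e) (snd e) t) (F (fst e) (snd e) t))"
    if "e \<in> E" for e
    using be_dens(1)[OF _ F(1) F(2), of "fst e" "snd e"] that by auto
  show "integrable (circ T0) (\<lambda>t. \<Sum>(y, z)\<in>E. gfun (q y z t) (m y t * r y z t) (F y z t))"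
    unfolding case_prod_unfold using ie by (intro Bochner_Integration.integrable_sum) auto
  have "Bterm F = (\<Sum>e\<in>E. be (fst e) (snd e) (F (fst e) (snd e)))"
    using Bterm_edges[OF F] by (simp add: case_prod_unfold)
  also have "\<dots> = (\<Sum>e\<in>E. \<integral>t. gfun (q (fst e) (snd e) t) (m (fst e) t * r (fst e) (snd e) t) (F (fst e) (snd e) t) \<partial>circ T0)"
    using be_dens(2)[OF _ F(1) F(2)] by (intro sum.cong) auto
  also have "\<dots> = (\<integral>t. (\<Sum>e\<in>E. gfun (q (fst e) (snd e) t) (m (fst e) t * r (fst e) (snd e) t) (F (fst e) (snd e) t)) \<partial>circ T0)"
    using ie by (intro Bochner_Integration.integral_sum[symmetric]) auto
  finally show "Bterm F = (\<integral>t. (\<Sum>(y, z)\<in>E. gfun (q y z t) (m y t * r y z t) (F y z t)) \<partial>circ T0)"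
    by (simp add: case_prod_unfold)
qed

lemma Aterm_dens:
  assumes \<phi>: "C1_time T0 \<phi>"
  shows "Aterm \<phi> = - ((\<integral>s\<in>{0..<T0}. (\<Sum>y\<in>UNIV. m y s * deriv (\<phi> y) s) \<partial>lborel) -
        (\<integral>s\<in>{0..<T0}. (\<Sum>y\<in>UNIV. ((\<Sum>z\<in>{z. (y, z) \<in> E}. q y z s)
                                    - (\<Sum>z\<in>{z. (z, y) \<in> E}. q z y s)) * \<phi> y s) \<partial>lborel))"
proof -
  have dc: "continuous_on UNIV (deriv (\<phi> y))" for y
  proof -
    obtain f' where f': "\<forall>t. (\<phi> y has_real_derivative f' t) (at t)" "continuous_on UNIV f'" "\<forall>t. deriv (\<phi> y) t = f' t"
      using C1_deriv[OF \<phi>] by blast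
    have "deriv (\<phi> y) = f'" using f'(3) by auto
    then show ?thesis using f'(2) by simp
  qed
  have pc: "continuous_on UNIV (\<phi> y)" for y
  proof -
    obtain f' where f': "\<forall>t. (\<phi> y has_real_derivative f' t) (at t)"
      using C1_deriv[OF \<phi>] by blast
    then show ?thesis by (intro DERIV_continuous_on) (auto intro: has_field_derivative_at_within)
  qed
  have "\<forall>y. \<exists>B. \<forall>t\<in>{0..<T0}. \<bar>deriv (\<phi> y) t\<bar> \<le> B" using cont_bdd[OF dc] by blast
  then obtain Bd where Bd: "\<And>y t. t \<in> {0..<T0} \<Longrightarrow> \<bar>deriv (\<phi> y) t\<bar> \<le> Bd y" by metis
  have "\<forall>y. \<exists>B. \<forall>t\<in>{0..<T0}. \<bar>\<phi> y t\<bar> \<le> B" using cont_bdd[OF pc] by blast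
  then obtain Bp where Bp: "\<And>y t. t \<in> {0..<T0} \<Longrightarrow> \<bar>\<phi> y t\<bar> \<le> Bp y" by metis
  have dm: "deriv (\<phi> y) \<in> borel_measurable borel" for y using dc cont_borel by auto
  have pm: "\<phi> y \<in> borel_measurable borel" for y using pc cont_borel by auto
  have sp: "space (circ T0) = {0..<T0}" by (rule space_circ)
  have t1: "(\<Sum>y\<in>UNIV. \<integral>s. deriv (\<phi> y) s \<partial>(\<mu> y)) = (\<integral>s\<in>{0..<T0}. (\<Sum>y\<in>UNIV. m y s * deriv (\<phi> y) s) \<partial>lborel)"
  proof -
    have "(\<Sum>y\<in>UNIV. \<integral>s. deriv (\<phi> y) s \<partial>(\<mu> y)) = (\<Sum>y\<in>UNIV. \<integral>s. m y s * deriv (\<phi> y) s \<partial>circ T0)"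
      using dm by (intro sum.cong refl int_mu_dens) auto
    also have "\<dots> = (\<integral>s. (\<Sum>y\<in>UNIV. m y s * deriv (\<phi> y) s) \<partial>circ T0)"
      using Bd sp dm by (intro Bochner_Integration.integral_sum[symmetric] int_mult_bdd[OF dm_int] mc) auto
    finally show ?thesis by (simp add: circ_int)
  qed
  have t2: "(\<Sum>(y, z)\<in>E. \<integral>s. (\<phi> y s - \<phi> z s) \<partial>(Q y z)) =
     (\<integral>s\<in>{0..<T0}. (\<Sum>y\<in>UNIV. ((\<Sum>z\<in>{z. (y, z) \<in> E}. q y z s)
                                    - (\<Sum>z\<in>{z. (z, y) \<in> E}. q z y s)) * \<phi> y s) \<partial>lborel)"
  proof -
    have ie: "integrable (circ T0) (\<lambda>s. q (fst e) (snd e) s * (\<phi> (fst e) s - \<phi> (snd e) s))" if e: "e \<in> E" for e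
    proof (intro int_mult_bdd[OF dq_int] mc)
      show "(fst e, snd e) \<in> E" using e by simp
      show "(\<lambda>s. \<phi> (fst e) s - \<phi> (snd e) s) \<in> borel_measurable borel" using pm by measurable
      fix t assume "t \<in> space (circ T0)"
      then have "\<bar>\<phi> (fst e) t\<bar> \<le> Bp (fst e)" "\<bar>\<phi> (snd e) t\<bar> \<le> Bp (snd e)" using Bp sp by auto
      then show "\<bar>\<phi> (fst e) t - \<phi> (snd e) t\<bar> \<le> Bp (fst e) + Bp (snd e)" by linarith
    qed
    have "(\<Sum>(y, z)\<in>E. \<integral>s. (\<phi> y s - \<phi> z s) \<partial>(Q y z)) = (\<Sum>e\<in>E. \<integral>s. q (fst e) (snd e) s * (\<phi> (fst e) s - \<phi> (snd e) s) \<partial>circ T0)"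
      unfolding case_prod_unfold using pm by (intro sum.cong refl int_Q_dens) auto
    also have "\<dots> = (\<integral>s. (\<Sum>e\<in>E. q (fst e) (snd e) s * (\<phi> (fst e) s - \<phi> (snd e) s)) \<partial>circ T0)"
      using ie by (intro Bochner_Integration.integral_sum[symmetric]) auto
    also have "\<dots> = (\<integral>s. (\<Sum>y\<in>UNIV. ((\<Sum>z\<in>{z. (y, z) \<in> E}. q y z s)
                                    - (\<Sum>z\<in>{z. (z, y) \<in> E}. q z y s)) * \<phi> y s) \<partial>circ T0)"
    proof (intro Bochner_Integration.integral_cong refl)
      fix s
      show "(\<Sum>e\<in>E. q (fst e) (snd e) s * (\<phi> (fst e) s - \<phi> (snd e) s)) = (\<Sum>y\<in>UNIV. ((\<Sum>z\<in>{z. (y, z) \<in> E}. q y z s)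
                                    - (\<Sum>z\<in>{z. (z, y) \<in> E}. q z y s)) * \<phi> y s)"
        using flow_id[of "\<lambda>y z. q y z s" "\<lambda>y. \<phi> y s" E] by (simp add: case_prod_unfold)
    qed
    finally show ?thesis by (simp add: circ_int)
  qed
  show ?thesis unfolding Aterm_def t1 t2 by simp
qed

end

end

context main
begin

lemma ac_of_dens: "dens m q \<Longrightarrow> abs_cont_prob T0 \<mu>"
  unfolding dens_def abs_cont_prob_def by blast

lemma zero_in_P: "(\<lambda>y t. 0, \<lambda>y z t. 0) \<in> Pset"
  using C1_zero by (auto simp: cont_edge_def periodic_fun_def)

lemma SUPI_nonneg: assumes "abs_cont_prob T0 \<mu>" shows "0 \<le> SUPI"
proof -
  have "Iphi T0 r (\<lambda>y t. 0) (\<lambda>y z t. 0) \<mu> Q = 0"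
    using assms by (simp add: Iphi_def Ihat_split Aterm0 Bterm0 zero_ereal_def)
  then show ?thesis using le_SUPI[OF zero_in_P] by simp
qed

lemma Bterm_cong:
  assumes "\<And>y z t. (y, z) \<in> E \<Longrightarrow> t \<in> {0..<T0} \<Longrightarrow> F y z t = F' y z t"
  shows "Bterm F = Bterm F'"
proof -
  have a: "(\<integral>s. F y z s \<partial>(Q y z)) = (\<integral>s. F' y z s \<partial>(Q y z))" if "(y, z) \<in> E" for y z
    using assms that space_Q[OF that] by (intro Bochner_Integration.integral_cong) auto
  have b: "(\<integral>s. (\<Sum>z\<in>{z. (y, z) \<in> E}. r y z s * (exp (F y z s) - 1)) \<partial>(\<mu> y)) =
      (\<integral>s. (\<Sum>z\<in>{z. (y, z) \<in> E}. r y z s * (exp (F' y z s) - 1)) \<partial>(\<mu> y))" for y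
    using assms space_mu[of y] by (intro Bochner_Integration.integral_cong sum.cong) auto
  show ?thesis unfolding Bterm_def using a b by (simp add: case_prod_unfold)
qed

definition Vval :: "('v \<Rightarrow> real \<Rightarrow> real) \<Rightarrow> ('v \<Rightarrow> 'v \<Rightarrow> real \<Rightarrow> real) \<Rightarrow> ereal" where
  "Vval m q = enn2ereal (\<integral>\<^sup>+ t\<in>{0..<T0}. (\<Sum>(y, z)\<in>E. Phi (q y z t) (m y t * r y z t)) \<partial>lborel)"

lemma upper:
  assumes L: "Lambda_dens T0 E \<mu> Q m q"
  shows "SUPI \<le> Vval m q"
proof (rule SUP_least)
  fix x assume "x \<in> Pset"
  then obtain \<phi> F where x: "x = (\<phi>, F)" and \<phi>: "C1_time T0 \<phi>" and F: "cont_edge T0 E F" by auto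
  have d: "dens m q" using L by (rule Lambda_dens_D)
  have ac: "abs_cont_prob T0 \<mu>" using d by (rule ac_of_dens)
  have A0: "Aterm \<phi> = 0"
    using L \<phi> Aterm_dens[OF d \<phi>] unfolding Lambda_dens_def by simp
  have Fc: "continuous_on UNIV (F y z)" if "(y, z) \<in> E" for y z using F that unfolding cont_edge_def by auto
  have "\<forall>e\<in>E. \<exists>B. \<forall>t\<in>{0..<T0}. \<bar>F (fst e) (snd e) t\<bar> \<le> B" using cont_bdd Fc by auto
  then obtain Bf where Bf: "\<And>e t. e \<in> E \<Longrightarrow> t \<in> {0..<T0} \<Longrightarrow> \<bar>F (fst e) (snd e) t\<bar> \<le> Bf e"
    by (metis bchoice)
  define Bd where "Bd = (\<Sum>e\<in>E. \<bar>Bf e\<bar>)"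
  have Bd0: "Bd \<ge> 0" unfolding Bd_def by (simp add: sum_nonneg)
  have FB: "\<bar>F y z t\<bar> \<le> Bd" if "(y, z) \<in> E" "t \<in> {0..<T0}" for y z t
  proof -
    have "\<bar>F y z t\<bar> \<le> Bf (y, z)" using Bf[of "(y, z)" t] that by simp
    also have "\<dots> \<le> \<bar>Bf (y, z)\<bar>" by simp
    also have "\<dots> \<le> Bd" unfolding Bd_def using that finE by (intro member_le_sum) auto
    finally show ?thesis .
  qed
  define F' where "F' y z t = max (- Bd) (min Bd (F y z t))" for y z t
  have F'eq: "F y z t = F' y z t" if "(y, z) \<in> E" "t \<in> {0..<T0}" for y z t
    using FB[OF that] unfolding F'_def by (auto simp: abs_le_iff)
  have F'm: "F' y z \<in> borel_measurable borel" if "(y, z) \<in> E" for y z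
    unfolding F'_def using cont_borel[OF Fc[OF that]] by measurable
  have F'b: "\<bar>F' y z t\<bar> \<le> Bd" for y z t unfolding F'_def using Bd0 by auto
  have "Bterm F = Bterm F'" using F'eq by (rule Bterm_cong)
  also have "\<dots> = (\<integral>t. (\<Sum>(y, z)\<in>E. gfun (q y z t) (m y t * r y z t) (F' y z t)) \<partial>circ T0)"
    by (rule Bterm_dens(2)[OF d F'm F'b])
  finally have BF: "Bterm F = \<dots>" .
  have "Iphi T0 r \<phi> F \<mu> Q = ereal (Bterm F)" using ac A0 by (simp add: Iphi_def Ihat_split)
  also have "\<dots> \<le> enn2ereal (\<integral>\<^sup>+t. ennreal (\<Sum>(y, z)\<in>E. gfun (q y z t) (m y t * r y z t) (F' y z t)) \<partial>circ T0)"
    unfolding BF by (rule int_le_nn[OF Bterm_dens(1)[OF d F'm F'b]])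
  also have "\<dots> \<le> enn2ereal (\<integral>\<^sup>+t. (\<Sum>(y, z)\<in>E. Phi (q y z t) (m y t * r y z t)) \<partial>circ T0)"
  proof -
    have "(\<integral>\<^sup>+t. ennreal (\<Sum>(y, z)\<in>E. gfun (q y z t) (m y t * r y z t) (F' y z t)) \<partial>circ T0)
        \<le> (\<integral>\<^sup>+t. (\<Sum>(y, z)\<in>E. Phi (q y z t) (m y t * r y z t)) \<partial>circ T0)"
    proof (intro nn_integral_mono)
      fix t
      have "ennreal (\<Sum>(y, z)\<in>E. gfun (q y z t) (m y t * r y z t) (F' y z t))
          \<le> (\<Sum>e\<in>E. ennreal (gfun (q (fst e) (snd e) t) (m (fst e) t * r (fst e) (snd e) t) (F' (fst e) (snd e) t)))"
        unfolding case_prod_unfold by (rule ennreal_sum_le[OF finE])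
      also have "\<dots> \<le> (\<Sum>e\<in>E. Phi (q (fst e) (snd e) t) (m (fst e) t * r (fst e) (snd e) t))"
        using dq_nn[OF d] dm_nn[OF d] r_nonneg by (intro sum_mono gfun_le_Phi) auto
      finally show "ennreal (\<Sum>(y, z)\<in>E. gfun (q y z t) (m y t * r y z t) (F' y z t))
          \<le> (\<Sum>(y, z)\<in>E. Phi (q y z t) (m y t * r y z t))" by (simp add: case_prod_unfold)
    qed
    then show ?thesis by (simp add: less_eq_ennreal.rep_eq[symmetric])
  qed
  also have "\<dots> = Vval m q" unfolding Vval_def by (simp add: circ_nn)
  finally show "(case x of (\<phi>, F) \<Rightarrow> Iphi T0 r \<phi> F \<mu> Q) \<le> Vval m q" using x by simp
qed

lemma lower:
  assumes L: "Lambda_dens T0 E \<mu> Q m q"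
  shows "Vval m q \<le> SUPI"
proof -
  have d: "dens m q" using L by (rule Lambda_dens_D)
  have ac: "abs_cont_prob T0 \<mu>" using d by (rule ac_of_dens)
  define Fn where "Fn n y z t = fstar n (q y z t) (m y t * r y z t)" for n y z t
  have Fnm: "Fn n y z \<in> borel_measurable borel" if e: "(y, z) \<in> E" for n y z
  proof -
    note [measurable] = dq_meas[OF d e] dm_meas[OF d, of y] r_meas[of y z]
    show ?thesis unfolding Fn_def fstar_def by measurable
  qed
  have Fnb: "\<bar>Fn n y z t\<bar> \<le> real n" for n y z t unfolding Fn_def by (rule fstar_bound)
  define K where "K n t = (\<Sum>(y, z)\<in>E. gfun (q y z t) (m y t * r y z t) (Fn n y z t))" for n t
  have qp: "0 \<le> q y z t" "0 \<le> m y t * r y z t" if "(y, z) \<in> E" for y z t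
    using dq_nn[OF d that] dm_nn[OF d] r_nonneg by auto
  have Kint: "integrable (circ T0) (K n)" for n
    unfolding K_def[abs_def] by (rule Bterm_dens(1)[OF d Fnm Fnb])
  have KB: "Bterm (Fn n) = (\<integral>t. K n t \<partial>circ T0)" for n
    unfolding K_def by (rule Bterm_dens(2)[OF d Fnm Fnb])
  have Knn: "0 \<le> K n t" for n t
    unfolding K_def Fn_def case_prod_unfold using qp by (intro sum_nonneg fstar_props(1)) auto
  have Kmono: "K n t \<le> K (Suc n) t" for n t
    unfolding K_def Fn_def case_prod_unfold using qp by (intro sum_mono fstar_props(2)) auto
  have Ksum: "ennreal (K n t) = (\<Sum>e\<in>E. ennreal (gfun (q (fst e) (snd e) t) (m (fst e) t * r (fst e) (snd e) t) (Fn n (fst e) (snd e) t)))" for n t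
    unfolding K_def case_prod_unfold using qp Fn_def by (subst sum_ennreal) (auto intro: fstar_props(1))
  have inc: "incseq (\<lambda>n t. ennreal (K n t))"
    by (intro incseq_SucI le_funI ennreal_leI Kmono)
  have lim: "(\<lambda>n. ennreal (K n t)) \<longlonglongrightarrow> (\<Sum>(y, z)\<in>E. Phi (q y z t) (m y t * r y z t))" for t
    unfolding Ksum case_prod_unfold Fn_def using qp by (intro tendsto_sum fstar_lim) auto
  have supeq: "(SUP n. ennreal (K n t)) = (\<Sum>(y, z)\<in>E. Phi (q y z t) (m y t * r y z t))" for t
  proof -
    have "incseq (\<lambda>n. ennreal (K n t))" using inc by (auto simp: incseq_def le_fun_def)
    then have "(\<lambda>n. ennreal (K n t)) \<longlonglongrightarrow> (SUP n. ennreal (K n t))" by (rule LIMSEQ_SUP)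
    then show ?thesis using lim[of t] by (rule LIMSEQ_unique)
  qed
  have Km: "(\<lambda>t. ennreal (K n t)) \<in> borel_measurable (circ T0)" for n
    using Kint[of n] by (intro measurable_compose[OF _ measurable_ennreal]) auto
  have "(\<integral>\<^sup>+t. (\<Sum>(y, z)\<in>E. Phi (q y z t) (m y t * r y z t)) \<partial>circ T0) = (\<integral>\<^sup>+t. (SUP n. ennreal (K n t)) \<partial>circ T0)"
    by (simp add: supeq)
  also have "\<dots> = (SUP n. \<integral>\<^sup>+t. ennreal (K n t) \<partial>circ T0)"
    using inc Km by (rule nn_integral_monotone_convergence_SUP)
  also have "\<dots> = (SUP n. ennreal (Bterm (Fn n)))"
    unfolding KB using Kint Knn by (simp add: nn_integral_eq_integral)
  finally have eq: "(\<integral>\<^sup>+t. (\<Sum>(y, z)\<in>E. Phi (q y z t) (m y t * r y z t)) \<partial>circ T0) = (SUP n. ennreal (Bterm (Fn n)))" .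
  have Bn: "0 \<le> Bterm (Fn n)" for n unfolding KB using Knn by simp
  have BS: "ereal (Bterm (Fn n)) \<le> SUPI" for n
    by (rule bterm_approx[OF ac Fnm Fnb])
  have "Vval m q = enn2ereal (SUP n. ennreal (Bterm (Fn n)))"
    unfolding Vval_def using eq by (simp add: circ_nn)
  also have "\<dots> = sup 0 (SUP n. enn2ereal (ennreal (Bterm (Fn n))))"
    by (simp add: Sup_ennreal.rep_eq image_image)
  also have "\<dots> \<le> SUPI"
  proof (rule sup_least)
    show "0 \<le> SUPI" using SUPI_nonneg[OF ac] .
    show "(SUP n. enn2ereal (ennreal (Bterm (Fn n)))) \<le> SUPI"
      using BS Bn by (intro SUP_least) (simp add: enn2ereal_ennreal)
  qed
  finally show ?thesis .
qed

end

context main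
begin

lemma caseA:
  assumes ac: "abs_cont_prob T0 \<mu>" and e: "(y, z) \<in> E" and N: "N \<in> sets (circ T0)"
    and n0: "emeasure (\<mu> y) N = 0" and pos: "emeasure (Q y z) N \<noteq> 0"
  shows "SUPI = \<infinity>"
proof (rule ereal_top)
  fix B :: real
  define mQ where "mQ = measure (Q y z) N"
  have NQ: "N \<in> sets (Q y z)" using N sets_Q[OF e] by simp
  have NM: "N \<in> sets (\<mu> y)" using N sets_mu by simp
  have Nb: "N \<in> sets borel" and NS: "N \<subseteq> {0..<T0}" using N by (auto simp: sets_circ_iff)
  have "emeasure (Q y z) N = ennreal mQ"
    unfolding mQ_def using finite_measure.emeasure_eq_measure[OF fin_Q[OF e]] by simp
  then have mQ0: "mQ > 0" using pos unfolding mQ_def by (simp add: less_le)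
  define K where "K = max 0 (B / mQ)"
  have K0: "K \<ge> 0" unfolding K_def by simp
  have BK: "B \<le> K * mQ"
  proof -
    have "B / mQ \<le> K" unfolding K_def by simp
    then show ?thesis using mQ0 by (simp add: divide_le_eq)
  qed
  define FK where "FK y' z' t = (if (y', z') = (y, z) then K * indicator N t else 0)" for y' z' t
  have FKm: "FK y' z' \<in> borel_measurable borel" for y' z'
    unfolding FK_def using Nb by (cases "(y', z') = (y, z)") auto
  have FKb: "\<bar>FK y' z' t\<bar> \<le> K" for y' z' t
    unfolding FK_def using K0 by (auto simp: indicator_def)
  have q1: "(\<integral>s. FK a b s \<partial>(Q a b)) = (if (a, b) = (y, z) then K * mQ else 0)" if "(a, b) \<in> E" for a b
  proof (cases "(a, b) = (y, z)")
    case True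
    then have "(\<integral>s. FK a b s \<partial>(Q a b)) = (\<integral>s. K * indicator N s \<partial>(Q y z))" unfolding FK_def by simp
    also have "\<dots> = K * measure (Q y z) (N \<inter> space (Q y z))" by simp
    also have "N \<inter> space (Q y z) = N" using NS space_Q[OF e] by auto
    finally show ?thesis using True unfolding mQ_def by simp
  next
    case False
    then have "FK a b s = 0" for s unfolding FK_def by auto
    then show ?thesis using False by auto
  qed
  have qsum: "(\<Sum>(a, b)\<in>E. \<integral>s. FK a b s \<partial>(Q a b)) = K * mQ"
  proof -
    have qx: "(case x of (a, b) \<Rightarrow> \<integral>s. FK a b s \<partial>(Q a b)) = (if x = (y, z) then K * mQ else 0)" if "x \<in> E" for x
      using q1 that by (cases x) simp
    have "(\<Sum>(a, b)\<in>E. \<integral>s. FK a b s \<partial>(Q a b)) = (\<Sum>x\<in>E. if x = (y, z) then K * mQ else 0)"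
      by (rule sum.cong[OF refl qx])
    also have "\<dots> = K * mQ" using e finE by (simp add: sum.delta')
    finally show ?thesis .
  qed
  have m0: "(\<integral>s. (\<Sum>b\<in>{b. (a, b) \<in> E}. r a b s * (exp (FK a b s) - 1)) \<partial>(\<mu> a)) = 0" for a
  proof (rule integral_eq_zero_AE)
    have "AE s in \<mu> a. s \<notin> N \<or> a \<noteq> y"
    proof (cases "a = y")
      case True
      have "N \<in> null_sets (\<mu> y)" using n0 NM by auto
      then show ?thesis using True by (auto dest: AE_not_in)
    qed simp
    then show "AE s in \<mu> a. (\<Sum>b\<in>{b. (a, b) \<in> E}. r a b s * (exp (FK a b s) - 1)) = 0"
      by eventually_elim (auto simp: FK_def intro!: sum.neutral)
  qed
  have "Bterm FK = K * mQ" unfolding Bterm_def qsum m0 by simp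
  then have "ereal B \<le> ereal (Bterm FK)" using BK by simp
  also have "\<dots> \<le> SUPI" by (rule bterm_approx[OF ac, of FK K]) (use FKm FKb in auto)
  finally show "ereal B \<le> SUPI" .
qed

lemma sf_circ: "sigma_finite_measure (circ T0)"
  using fin_circ0 by (simp add: finite_measure_def)

lemma dens_exists:
  assumes md: "mu_density T0 \<mu> m" and e: "(y, z) \<in> E"
    and abs: "\<And>N. N \<in> sets (circ T0) \<Longrightarrow> emeasure (\<mu> y) N = 0 \<Longrightarrow> emeasure (Q y z) N = 0"
  shows "\<exists>qe. qe \<in> borel_measurable lborel \<and> (\<forall>t. 0 \<le> qe t) \<and> Q y z = density (circ T0) (\<lambda>t. ennreal (qe t))"
proof -
  have mm: "m y \<in> borel_measurable lborel" and meq: "\<mu> y = density (circ T0) (\<lambda>t. ennreal (m y t))"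
    using md unfolding mu_density_def by auto
  have acm: "absolutely_continuous (circ T0) (\<mu> y)"
    unfolding meq by (intro absolutely_continuousI_density measurable_compose[OF _ measurable_ennreal] meas_lborel_circ mm)
  have acQ: "absolutely_continuous (circ T0) (Q y z)"
    unfolding absolutely_continuous_def
  proof
    fix N assume N: "N \<in> null_sets (circ T0)"
    then have "N \<in> null_sets (\<mu> y)" using acm unfolding absolutely_continuous_def by auto
    then have "emeasure (\<mu> y) N = 0" by auto
    moreover have "N \<in> sets (circ T0)" using N by auto
    ultimately have "emeasure (Q y z) N = 0" using abs by auto
    then show "N \<in> null_sets (Q y z)" using \<open>N \<in> sets (circ T0)\<close> sets_Q[OF e] by auto
  qed
  obtain D where D: "D \<in> borel_measurable (circ T0)" "AE x in circ T0. RN_deriv (circ T0) (Q y z) x = ennreal (D x)"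
    "\<And>x. 0 \<le> D x"
    using sigma_finite_measure.real_RN_deriv[OF sf_circ fin_Q[OF e] acQ sets_Q[OF e]] by blast
  have "Q y z = density (circ T0) (RN_deriv (circ T0) (Q y z))"
    using sigma_finite_measure.density_RN_deriv[OF sf_circ acQ sets_Q[OF e]] by simp
  also have "\<dots> = density (circ T0) (\<lambda>t. ennreal (D t))"
    using D by (intro density_cong) auto
  finally have QD: "Q y z = density (circ T0) (\<lambda>t. ennreal (D t))" .
  define qe where "qe t = (if t \<in> {0..<T0} then D t else 0)" for t
  have "(\<lambda>t. if t \<in> {0..<T0} then D t else 0) \<in> borel_measurable lborel"
    using D(1) unfolding circ_def by (subst measurable_restrict_space_iff[symmetric]) auto
  then have qm: "qe \<in> borel_measurable lborel" unfolding qe_def .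
  have m1: "(\<lambda>t. ennreal (D t)) \<in> borel_measurable (circ T0)"
    using D(1) by (rule measurable_compose[OF _ measurable_ennreal])
  have m2: "(\<lambda>t. ennreal (qe t)) \<in> borel_measurable (circ T0)"
    using meas_lborel_circ[OF qm] by (rule measurable_compose[OF _ measurable_ennreal])
  have "density (circ T0) (\<lambda>t. ennreal (D t)) = density (circ T0) (\<lambda>t. ennreal (qe t))"
    by (rule density_cong[OF m1 m2], rule AE_I2) (simp add: qe_def space_circ)
  then show ?thesis using QD qm D(3) by (intro exI[of _ qe]) (auto simp: qe_def)
qed

lemma caseB:
  assumes ac: "abs_cont_prob T0 \<mu>" and nL: "\<not> (\<exists>m q. Lambda_dens T0 E \<mu> Q m q)"
    and abs: "\<And>y z N. (y, z) \<in> E \<Longrightarrow> N \<in> sets (circ T0) \<Longrightarrow> emeasure (\<mu> y) N = 0 \<Longrightarrow> emeasure (Q y z) N = 0"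
  shows "SUPI = \<infinity>"
proof -
  obtain m where md: "mu_density T0 \<mu> m" using ac unfolding abs_cont_prob_def by blast
  have "\<forall>e\<in>E. \<exists>qe. qe \<in> borel_measurable lborel \<and> (\<forall>t. 0 \<le> qe t) \<and> Q (fst e) (snd e) = density (circ T0) (\<lambda>t. ennreal (qe t))"
    using dens_exists[OF md] abs by auto
  then obtain qf where qf: "\<And>e. e \<in> E \<Longrightarrow> qf e \<in> borel_measurable lborel \<and> (\<forall>t. 0 \<le> qf e t) \<and> Q (fst e) (snd e) = density (circ T0) (\<lambda>t. ennreal (qf e t))"
    by (metis bchoice)
  define q where "q y z = (if (y, z) \<in> E then qf (y, z) else (\<lambda>t. 0))" for y z
  have d: "dens m q" unfolding dens_def using md qf by (auto simp: q_def)
  have supp1: "AE t in circ T0. m y t = 0 \<longrightarrow> q y z t = 0" if e: "(y, z) \<in> E" for y z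
  proof -
    note [measurable] = dm_meas[OF d, of y] dq_meas[OF d e]
    define N where "N = {t \<in> {0..<T0}. m y t = 0 \<and> q y z t \<noteq> 0}"
    have Nb: "N \<in> sets borel" unfolding N_def by measurable
    have Nc: "N \<in> sets (circ T0)" using Nb by (auto simp: sets_circ_iff N_def)
    have "emeasure (\<mu> y) N = (\<integral>\<^sup>+t. ennreal (m y t) * indicator N t \<partial>circ T0)"
      by (subst dm_eq[OF d]) (intro emeasure_density Nc meas_circ[OF refl] dm_meas[OF d] measurable_compose[OF _ measurable_ennreal])
    also have "\<dots> = (\<integral>\<^sup>+t. 0 \<partial>circ T0)" by (intro nn_integral_cong) (auto simp: N_def indicator_def)
    finally have "emeasure (\<mu> y) N = 0" by simp
    then have "emeasure (Q y z) N = 0" using abs[OF e Nc] by simp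
    moreover have "emeasure (Q y z) N = (\<integral>\<^sup>+t. ennreal (q y z t) * indicator N t \<partial>circ T0)"
      by (subst dq_eq[OF d e]) (intro emeasure_density Nc meas_circ[OF refl] dq_meas[OF d e] measurable_compose[OF _ measurable_ennreal])
    ultimately have "AE t in circ T0. ennreal (q y z t) * indicator N t = 0"
      using Nb by (subst nn_integral_0_iff_AE[symmetric]) (auto intro!: meas_circ[OF refl])
    moreover have "AE t in circ T0. t \<in> space (circ T0)" by (rule AE_space)
    ultimately show ?thesis
    proof eventually_elim
      case (elim t)
      then have tS: "t \<in> {0..<T0}" using space_circ by auto
      show "m y t = 0 \<longrightarrow> q y z t = 0"
      proof (rule impI, rule ccontr)
        assume m0: "m y t = 0" and qn: "q y z t \<noteq> 0"
        then have "t \<in> N" using tS unfolding N_def by auto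
        then have "ennreal (q y z t) = 0" using elim by simp
        then have "q y z t \<le> 0" by (metis ennreal_eq_0_iff)
        then show False using dq_nn[OF d e, of t] qn by simp
      qed
    qed
  qed
  have supp: "AE t in lborel. t \<in> {0..<T0} \<longrightarrow> (\<forall>(y, z)\<in>E. m y t = 0 \<longrightarrow> q y z t = 0)"
  proof -
    have "AE t in lborel. \<forall>e\<in>E. t \<in> {0..<T0} \<longrightarrow> (m (fst e) t = 0 \<longrightarrow> q (fst e) (snd e) t = 0)"
    proof (rule AE_finite_allI[OF finE])
      fix e assume e: "e \<in> E"
      have "AE t in circ T0. m (fst e) t = 0 \<longrightarrow> q (fst e) (snd e) t = 0" using supp1[of "fst e" "snd e"] e by simp
      then show "AE t in lborel. t \<in> {0..<T0} \<longrightarrow> (m (fst e) t = 0 \<longrightarrow> q (fst e) (snd e) t = 0)"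
        unfolding circ_def by (subst (asm) AE_restrict_space_iff) auto
    qed
    then show ?thesis by eventually_elim auto
  qed
  have qpart: "\<forall>(y, z)\<in>E. q y z \<in> borel_measurable lborel \<and> (\<forall>t. 0 \<le> q y z t) \<and>
          Q y z = density (circ T0) (\<lambda>t. ennreal (q y z t))"
    using d unfolding dens_def by blast
  obtain f where f: "C1_time T0 f"
    and neq: "(\<integral>s\<in>{0..<T0}. (\<Sum>y\<in>UNIV. m y s * deriv (f y) s) \<partial>lborel) \<noteq>
        (\<integral>s\<in>{0..<T0}. (\<Sum>y\<in>UNIV. ((\<Sum>z\<in>{z. (y, z) \<in> E}. q y z s)
                                    - (\<Sum>z\<in>{z. (z, y) \<in> E}. q z y s)) * f y s) \<partial>lborel)"
  proof -
    have "\<not> Lambda_dens T0 E \<mu> Q m q" using nL by blast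
    then show ?thesis using that md qpart supp unfolding Lambda_dens_def by blast
  qed
  have A: "Aterm f \<noteq> 0" using Aterm_dens[OF d f] neq by simp
  show "SUPI = \<infinity>"
  proof (rule ereal_top)
    fix B :: real
    define c where "c = B / Aterm f"
    have inP: "(\<lambda>y t. c * f y t, \<lambda>y z t. 0) \<in> Pset"
      using C1_scale[OF f] by (auto simp: cont_edge_def periodic_fun_def)
    have "Iphi T0 r (\<lambda>y t. c * f y t) (\<lambda>y z t. 0) \<mu> Q = ereal (c * Aterm f)"
      using ac by (simp add: Iphi_def Ihat_split Aterm_scale[OF f] Bterm0)
    also have "c * Aterm f = B" unfolding c_def using A by simp
    finally show "ereal B \<le> SUPI" using le_SUPI[OF inP] by simp
  qed
qed

end

theorem lemma8p4:
  fixes T0 :: real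
    and r :: "'v::finite \<Rightarrow> 'v \<Rightarrow> real \<Rightarrow> real"
    and \<mu> :: "'v \<Rightarrow> real measure"
    and Q :: "'v \<Rightarrow> 'v \<Rightarrow> real measure"
  assumes T0_pos: "T0 > 0"
    and r_nonneg: "\<And>y z t. r y z t \<ge> 0"
    and r_meas: "\<And>y z. r y z \<in> borel_measurable borel"
    and r_per: "\<And>y z. periodic_fun T0 (r y z)"
    and r_diag: "\<And>x t. r x x t = 0"
    and A1: "\<And>y z. (\<exists>t>0. r y z t > 0) \<Longrightarrow> (\<forall>t>0. r y z t > 0)"
    and A2: "\<And>y z. (y, z) \<in> (edges r)\<^sup>*"
    and A3: "\<exists>c C. 0 < c \<and> (\<forall>(y, z)\<in>edges r. \<forall>t\<in>{0..T0}. c \<le> r y z t \<and> r y z t \<le> C)"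
    and A4: "{t \<in> {0..<T0}. \<exists>y z. \<not> isCont (r y z) t} \<in> null_sets lborel"
    and MQ: "Mstar T0 (edges r) \<mu> Q"
  shows "Irate T0 r \<mu> Q =
           (SUP (\<phi>, F) \<in> {(\<phi>, F). C1_time T0 \<phi> \<and> cont_edge T0 (edges r) F}. Iphi T0 r \<phi> F \<mu> Q)"
proof -
  obtain c C where bnd: "\<forall>(y, z)\<in>edges r. \<forall>t\<in>{0..T0}. c \<le> r y z t \<and> r y z t \<le> C"
    using A3 by blast
  interpret main T0 r \<mu> Q "max C 0"
  proof
    fix y z t assume "(y, z) \<in> edges r" "t \<in> {0..<T0}"
    then have "r y z t \<le> C" using bnd by auto
    then show "r y z t \<le> max C 0" by simp
  qed (use T0_pos r_nonneg r_meas MQ in auto)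
  show ?thesis
  proof (cases "abs_cont_prob T0 \<mu>")
    case False
    have nL: "\<not> (\<exists>m q. Lambda_dens T0 (edges r) \<mu> Q m q)"
      using False unfolding Lambda_dens_def abs_cont_prob_def by blast
    have I: "Irate T0 r \<mu> Q = \<infinity>" using nL by (simp add: Irate_def)
    have "Iphi T0 r (\<lambda>y t. 0) (\<lambda>y z t. 0) \<mu> Q = \<infinity>" using False by (simp add: Iphi_def)
    then have "\<infinity> \<le> SUPI" using le_SUPI[OF zero_in_P] by simp
    then have "SUPI = \<infinity>" by (rule antisym[rotated]) simp
    then show ?thesis using I by simp
  next
    case ac: True
    show ?thesis
    proof (cases "\<exists>m q. Lambda_dens T0 (edges r) \<mu> Q m q")
      case True
      define P where "P = (\<lambda>x. case x of (m, q) \<Rightarrow> Lambda_dens T0 (edges r) \<mu> Q m q)"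
      have ex: "\<exists>x. P x" using True by (auto simp: P_def)
      obtain m q where mq: "(SOME x. P x) = (m, q)" by (cases "SOME x. P x")
      have L: "Lambda_dens T0 (edges r) \<mu> Q m q" using someI_ex[OF ex] mq by (simp add: P_def)
      have "Irate T0 r \<mu> Q = Vval m q"
        using True mq unfolding Irate_def Vval_def P_def by (simp add: Let_def)
      also have "\<dots> = SUPI" using upper[OF L] lower[OF L] by (rule antisym[rotated])
      finally show ?thesis .
    next
      case False
      have I: "Irate T0 r \<mu> Q = \<infinity>" using False by (simp add: Irate_def)
      have "SUPI = \<infinity>"
      proof (cases "\<exists>y z N. (y, z) \<in> edges r \<and> N \<in> sets (circ T0) \<and> emeasure (\<mu> y) N = 0 \<and> emeasure (Q y z) N \<noteq> 0")
        case True
        then obtain y z N where "(y, z) \<in> edges r" "N \<in> sets (circ T0)" "emeasure (\<mu> y) N = 0" "emeasure (Q y z) N \<noteq> 0"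
          by blast
        then show ?thesis using caseA[OF ac] by blast
      next
        case nA: False
        show ?thesis by (rule caseB[OF ac False]) (use nA in blast)
      qed
      then show ?thesis using I by simp
    qed
  qed
qed


end
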